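(* Let $(M,\varphi,g)$ be an anti-paraKähler manifold of dimension $2k$ and $(TM,g_{BS})$ its tangent bundle with the Berger type deformed Sasaki metric. Let $h$ be another Riemannian metric on $M$ (anti-paraHermitian with respect to some almost paracomplex structure $\varphi_1$). Then the projection $\pi:(TM,g_{BS})\to(M,h)$ is a harmonic map if and only if $h$ is harmonic with respect to $g$, i.e. $g^{ij}\big({}^h\Gamma^l_{ij}-\Gamma^l_{ij}\big)=0$ for all $l$, where $\Gamma^l_{ij}$ and ${}^h\Gamma^l_{ij}$ are the Christoffel symbols of $g$ and $h$.
   Context: An anti-paraKähler manifold $(M,\varphi,g)$ of dimension $2k$ consists of a Riemannian metric $g$ and a $(1,1)$-tensor field $\varphi$ with $\varphi^2=\mathrm{id}$ whose $(+1)$- and $(-1)$-eigenbundles both have rank $k$, such that $g(\varphi X,Y)=g(X,\varphi Y)$ for all vector fields $X,Y$ and $\nabla\varphi=0$, where $\nabla$ is the Levi-Civita connection of $g$. Let $\pi:TM\to M$ be the tangent bundle; points of $TM$ are denoted $u$. For a vector field $X$ on $M$, $X^H$ denotes its horizontal lift to $TM$ with respect to $\nabla$ and $X^V$ its vertical lift. For a constant $\delta$, the Berger type deformed Sasaki metric $g_{BS}$ on $TM$ is the Riemannian metric defined at $u\in TM$ by $g_{BS}(X^H,Y^H)=g(X,Y)$, $g_{BS}(X^H,Y^V)=g_{BS}(X^V,Y^H)=0$, $g_{BS}(X^V,Y^V)=g(X,Y)+\delta^2 g(X,\varphi u)\,g(Y,\varphi u)$ (all evaluated at $\pi(u)$).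 An almost paracomplex structure $\varphi_1$ is a $(1,1)$-tensor with $\varphi_1^2=\mathrm{id}$ whose $\pm1$-eigenbundles have equal rank, and $h$ is anti-paraHermitian if $h(\varphi_1X,Y)=h(X,\varphi_1Y)$. For a smooth map $f$ between Riemannian manifolds, the tension field is $\tau(f)=\mathrm{trace}\,\beta(f)$ where $\beta(f)(X,Y)=\nabla^{f}_X(df(Y))-df(\nabla_XY)$; $f$ is harmonic if $\tau(f)=0$. *)

theory Defs
  imports "HOL-Analysis.Analysis"
begin

text \<open>A manifold is modelled by an open
coordinate domain U in real^'n; tensor fields are matrix-valued functions;
the tangent bundle TU is modelled as U x real^'n inside real^('n+'n)
(Inl = base coordinates x^i, Inr = fibre coordinates y^i).\<close>

definition pd :: "'i::finite \<Rightarrow> (real^'i \<Rightarrow> real) \<Rightarrow> real^'i \<Rightarrow> real" where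
  "pd i f x = deriv (\<lambda>t. f (x + t *\<^sub>R axis i 1)) 0"

definition smooth_on :: "(real^'i::finite) set \<Rightarrow> (real^'i \<Rightarrow> real) \<Rightarrow> bool" where
  "smooth_on U f \<longleftrightarrow> (\<forall>ds::'i list. (foldr pd ds f) differentiable_on U)"

definition riem_metric :: "(real^'i::finite) set \<Rightarrow> (real^'i \<Rightarrow> real^'i^'i) \<Rightarrow> bool" where
  "riem_metric U G \<longleftrightarrow> (\<forall>a b. smooth_on U (\<lambda>x. G x $ a $ b)) \<and>
     (\<forall>x\<in>U. transpose (G x) = G x \<and> (\<forall>v. v \<noteq> 0 \<longrightarrow> v \<bullet> (G x *v v) > 0))"

definition christoffel :: "(real^'i::finite \<Rightarrow> real^'i^'i) \<Rightarrow> real^'i \<Rightarrow> 'i \<Rightarrow> 'i \<Rightarrow> 'i \<Rightarrow> real" where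
  "christoffel G x l i j = (1/2) * (\<Sum>m\<in>UNIV. matrix_inv (G x) $ l $ m *
      (pd i (\<lambda>z. G z $ m $ j) x + pd j (\<lambda>z. G z $ m $ i) x - pd m (\<lambda>z. G z $ i $ j) x))"

definition tension :: "(real^'i::finite \<Rightarrow> real^'i^'i) \<Rightarrow> (real^'j::finite \<Rightarrow> real^'j^'j)
    \<Rightarrow> (real^'i \<Rightarrow> real^'j) \<Rightarrow> real^'i \<Rightarrow> 'j \<Rightarrow> real" where
  "tension G H F x l = (\<Sum>a\<in>UNIV. \<Sum>b\<in>UNIV. matrix_inv (G x) $ a $ b *
      (pd a (pd b (\<lambda>z. F z $ l)) x
       - (\<Sum>c\<in>UNIV. christoffel G x c a b * pd c (\<lambda>z. F z $ l) x)
       + (\<Sum>m\<in>UNIV. \<Sum>q\<in>UNIV. christoffel H (F x) l m q * pd a (\<lambda>z. F z $ m) x * pd b (\<lambda>z. F z $ q) x)))"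

definition harmonic_map :: "(real^'i::finite) set \<Rightarrow> (real^'i \<Rightarrow> real^'i^'i) \<Rightarrow> (real^'j::finite \<Rightarrow> real^'j^'j)
    \<Rightarrow> (real^'i \<Rightarrow> real^'j) \<Rightarrow> bool" where
  "harmonic_map W G H F \<longleftrightarrow> (\<forall>x\<in>W. \<forall>l. tension G H F x l = 0)"

definition apc_structure :: "(real^'i::finite) set \<Rightarrow> (real^'i \<Rightarrow> real^'i^'i) \<Rightarrow> bool" where
  "apc_structure U \<phi> \<longleftrightarrow> (\<forall>a b. smooth_on U (\<lambda>x. \<phi> x $ a $ b)) \<and>
     (\<forall>x\<in>U. \<phi> x ** \<phi> x = mat 1 \<and> dim {v. \<phi> x *v v = v} = dim {v. \<phi> x *v v = - v})"

definition anti_paraHermitian :: "(real^'i::finite) set \<Rightarrow> (real^'i \<Rightarrow> real^'i^'i) \<Rightarrow> (real^'i \<Rightarrow> real^'i^'i) \<Rightarrow> bool" where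
  "anti_paraHermitian U G \<phi> \<longleftrightarrow> (\<forall>x\<in>U. transpose (\<phi> x) ** G x = G x ** \<phi> x)"

definition covd_phi :: "(real^'i::finite \<Rightarrow> real^'i^'i) \<Rightarrow> (real^'i \<Rightarrow> real^'i^'i) \<Rightarrow> real^'i \<Rightarrow> 'i \<Rightarrow> 'i \<Rightarrow> 'i \<Rightarrow> real" where
  "covd_phi G \<phi> x i l j = pd i (\<lambda>z. \<phi> z $ l $ j) x
     + (\<Sum>m\<in>UNIV. christoffel G x l i m * \<phi> x $ m $ j)
     - (\<Sum>m\<in>UNIV. \<phi> x $ l $ m * christoffel G x m i j)"

definition anti_paraKaehler :: "(real^'i::finite) set \<Rightarrow> (real^'i \<Rightarrow> real^'i^'i) \<Rightarrow> (real^'i \<Rightarrow> real^'i^'i) \<Rightarrow> bool" where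
  "anti_paraKaehler U G \<phi> \<longleftrightarrow> open U \<and> riem_metric U G \<and> apc_structure U \<phi> \<and>
     anti_paraHermitian U G \<phi> \<and> (\<forall>x\<in>U. \<forall>i l j. covd_phi G \<phi> x i l j = 0)"

definition base :: "real^('n::finite + 'n) \<Rightarrow> real^'n" where
  "base p = (\<chi> i. p $ Inl i)"

definition fib :: "real^('n::finite + 'n) \<Rightarrow> real^'n" where
  "fib p = (\<chi> i. p $ Inr i)"

definition pair_tb :: "real^'n::finite \<Rightarrow> real^'n \<Rightarrow> real^('n + 'n)" where
  "pair_tb X V = (\<chi> a. case a of Inl i \<Rightarrow> X $ i | Inr i \<Rightarrow> V $ i)"

definition conn :: "(real^'n::finite \<Rightarrow> real^'n^'n) \<Rightarrow> real^'n \<Rightarrow> real^'n \<Rightarrow> real^'n \<Rightarrow> real^'n" where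
  "conn G x y X = (\<chi> m. \<Sum>i\<in>UNIV. \<Sum>j\<in>UNIV. christoffel G x m i j * X $ i * y $ j)"

definition hlift :: "(real^'n::finite \<Rightarrow> real^'n^'n) \<Rightarrow> real^('n + 'n) \<Rightarrow> real^'n \<Rightarrow> real^('n + 'n)" where
  "hlift G p X = pair_tb X (- conn G (base p) (fib p) X)"

definition vlift :: "real^'n::finite \<Rightarrow> real^('n + 'n)" where
  "vlift V = pair_tb 0 V"

text \<open>Every tangent vector xi at p decomposes uniquely as xi = (hcomp xi)^H + (vcomp xi)^V.\<close>
definition hcomp :: "real^('n::finite + 'n) \<Rightarrow> real^'n" where
  "hcomp \<xi> = base \<xi>"

definition vcomp :: "(real^'n::finite \<Rightarrow> real^'n^'n) \<Rightarrow> real^('n + 'n) \<Rightarrow> real^('n + 'n) \<Rightarrow> real^'n" where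
  "vcomp G p \<xi> = fib \<xi> + conn G (base p) (fib p) (base \<xi>)"

definition gm :: "(real^'n::finite \<Rightarrow> real^'n^'n) \<Rightarrow> real^'n \<Rightarrow> real^'n \<Rightarrow> real^'n \<Rightarrow> real" where
  "gm G x u v = u \<bullet> (G x *v v)"

definition gBS :: "real \<Rightarrow> (real^'n::finite \<Rightarrow> real^'n^'n) \<Rightarrow> (real^'n \<Rightarrow> real^'n^'n)
    \<Rightarrow> real^('n + 'n) \<Rightarrow> real^('n + 'n) \<Rightarrow> real^('n + 'n) \<Rightarrow> real" where
  "gBS \<delta> G \<phi> p \<xi> \<eta> =
     (let x = base p; phiu = \<phi> x *v fib p; V = vcomp G p \<xi>; W = vcomp G p \<eta> in
      gm G x (hcomp \<xi>) (hcomp \<eta>) + gm G x V W + \<delta>^2 * gm G x V phiu * gm G x W phiu)"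

definition gBS_matrix :: "real \<Rightarrow> (real^'n::finite \<Rightarrow> real^'n^'n) \<Rightarrow> (real^'n \<Rightarrow> real^'n^'n)
    \<Rightarrow> real^('n + 'n) \<Rightarrow> real^('n + 'n)^('n + 'n)" where
  "gBS_matrix \<delta> G \<phi> p = (\<chi> a b. gBS \<delta> G \<phi> p (axis a 1) (axis b 1))"

definition tb :: "(real^'n::finite) set \<Rightarrow> (real^('n + 'n)) set" where
  "tb U = {p. base p \<in> U}"

end

theory Submission
  imports Defs
begin

definition ldr :: "'i::finite \<Rightarrow> (real^'i \<Rightarrow> real) \<Rightarrow> real^'i \<Rightarrow> real \<Rightarrow> bool" where
  "ldr i f x D \<longleftrightarrow> ((\<lambda>t. f (x + t *\<^sub>R axis i 1)) has_real_derivative D) (at 0)"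

lemma hd_pd: "ldr i f x D \<Longrightarrow> pd i f x = D"
  unfolding ldr_def pd_def by (rule DERIV_imp_deriv)

lemma hd_pd': "ldr i f x D \<Longrightarrow> ldr i f x (pd i f x)"
  using hd_pd by metis

lemma hd_const[simp]: "ldr i (\<lambda>z. c) x 0"
  unfolding ldr_def by simp

lemma hd_add: "ldr i f x D \<Longrightarrow> ldr i g x E \<Longrightarrow> ldr i (\<lambda>z. f z + g z) x (D + E)"
  unfolding ldr_def by (rule DERIV_add)

lemma hd_diff: "ldr i f x D \<Longrightarrow> ldr i g x E \<Longrightarrow> ldr i (\<lambda>z. f z - g z) x (D - E)"
  unfolding ldr_def by (rule DERIV_diff)

lemma hd_minus: "ldr i f x D \<Longrightarrow> ldr i (\<lambda>z. - f z) x (- D)"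
  unfolding ldr_def by (rule DERIV_minus)

lemma hd_mult: "ldr i f x D \<Longrightarrow> ldr i g x E \<Longrightarrow> ldr i (\<lambda>z. f z * g z) x (D * g x + f x * E)"
  unfolding ldr_def by (drule (1) DERIV_mult) (simp add: mult.commute)

lemma hd_cmult: "ldr i f x D \<Longrightarrow> ldr i (\<lambda>z. c * f z) x (c * D)"
  unfolding ldr_def by (rule DERIV_cmult)

lemma hd_sum: "finite A \<Longrightarrow> (\<And>k. k \<in> A \<Longrightarrow> ldr i (f k) x (D k)) \<Longrightarrow> ldr i (\<lambda>z. \<Sum>k\<in>A. f k z) x (\<Sum>k\<in>A. D k)"
  unfolding ldr_def by (rule DERIV_sum)

lemma hd_cong: "ldr i f x D \<Longrightarrow> D = E \<Longrightarrow> ldr i f x E" by simp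

lemma hd_unique: "ldr i f x D \<Longrightarrow> ldr i f x E \<Longrightarrow> D = E"
  using hd_pd by metis

lemma hd_local:
  assumes "open S" "x \<in> S" "\<And>z. z \<in> S \<Longrightarrow> f z = g z" "ldr i f x D"
  shows "ldr i g x D"
proof -
  let ?T = "(\<lambda>t::real. x + t *\<^sub>R axis i 1) -` S"
  have "open ?T" by (intro open_vimage assms(1) continuous_intros)
  have "0 \<in> ?T" using assms(2) by simp
  show ?thesis using assms(4) unfolding ldr_def
    by (rule has_field_derivative_transform_within_open[OF _ \<open>open ?T\<close> \<open>0 \<in> ?T\<close>]) (simp add: assms(3))
qed

lemma hd_differentiable:
  assumes "f differentiable (at x)"
  shows "ldr i f x (pd i f x)"
proof -
  have "(\<lambda>t::real. x + t *\<^sub>R axis i 1) differentiable (at 0)"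
    by (intro derivative_intros)
  then have "(f \<circ> (\<lambda>t::real. x + t *\<^sub>R axis i 1)) differentiable (at 0)"
    using assms by (intro differentiable_chain_at) auto
  then have "DERIV (f \<circ> (\<lambda>t::real. x + t *\<^sub>R axis i 1)) 0 :> deriv (f \<circ> (\<lambda>t::real. x + t *\<^sub>R axis i 1)) 0"
    using DERIV_deriv_iff_real_differentiable by blast
  then show ?thesis unfolding ldr_def pd_def by (simp add: o_def)
qed

lemma hd_const_ev:
  assumes "open S" "x \<in> S" "\<And>z. z \<in> S \<Longrightarrow> f z = c"
  shows "ldr i f x 0"
  using hd_local[OF assms(1,2), of "\<lambda>z. c" f] assms(3) by auto

definition mhd :: "'i::finite \<Rightarrow> (real^'i \<Rightarrow> real^'c^'r) \<Rightarrow> real^'i \<Rightarrow> real^'c^'r \<Rightarrow> bool" where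
  "mhd i F x F' \<longleftrightarrow> (\<forall>a b. ldr i (\<lambda>z. F z $ a $ b) x (F' $ a $ b))"

definition vhd :: "'i::finite \<Rightarrow> (real^'i \<Rightarrow> real^'r) \<Rightarrow> real^'i \<Rightarrow> real^'r \<Rightarrow> bool" where
  "vhd i v x v' \<longleftrightarrow> (\<forall>a. ldr i (\<lambda>z. v z $ a) x (v' $ a))"

definition outer :: "real^'r \<Rightarrow> real^'c \<Rightarrow> real^'c^'r" where
  "outer u v = (\<chi> a b. u $ a * v $ b)"

lemma mhd_mult:
  fixes F :: "real^'i::finite \<Rightarrow> real^'m::finite^'r" and H :: "real^'i \<Rightarrow> real^'c^'m"
  assumes "mhd i F x F'" "mhd i H x H'"
  shows "mhd i (\<lambda>z. F z ** H z) x (F' ** H x + F x ** H')"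
  unfolding mhd_def matrix_matrix_mult_def
proof (intro allI)
  fix a b
  have "ldr i (\<lambda>z. \<Sum>k\<in>UNIV. F z $ a $ k * H z $ k $ b) x (\<Sum>k\<in>UNIV. F' $ a $ k * H x $ k $ b + F x $ a $ k * H' $ k $ b)"
    using assms unfolding mhd_def by (intro hd_sum hd_mult) auto
  then show "ldr i (\<lambda>z. (\<chi> i j. \<Sum>k\<in>UNIV. F z $ i $ k * H z $ k $ j) $ a $ b) x
      (((\<chi> i j. \<Sum>k\<in>UNIV. F' $ i $ k * H x $ k $ j) + (\<chi> i j. \<Sum>k\<in>UNIV. F x $ i $ k * H' $ k $ j)) $ a $ b)"
    by (simp add: sum.distrib)
qed

lemma mhd_add: "mhd i F x F' \<Longrightarrow> mhd i H x H' \<Longrightarrow> mhd i (\<lambda>z. F z + H z) x (F' + H')"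
  unfolding mhd_def by (auto intro: hd_add)

lemma mhd_diff: "mhd i F x F' \<Longrightarrow> mhd i H x H' \<Longrightarrow> mhd i (\<lambda>z. F z - H z) x (F' - H')"
  unfolding mhd_def by (auto intro: hd_diff)

lemma mhd_scale: "mhd i F x F' \<Longrightarrow> mhd i (\<lambda>z. c *\<^sub>R F z) x (c *\<^sub>R F')"
  unfolding mhd_def by (auto intro: hd_cmult)

lemma mhd_const: "mhd i (\<lambda>z. C) x 0"
  unfolding mhd_def by auto

lemma mhd_transpose: "mhd i F x F' \<Longrightarrow> mhd i (\<lambda>z. transpose (F z)) x (transpose F')"
  unfolding mhd_def transpose_def by auto

lemma mhd_pd: "mhd i F x F' \<Longrightarrow> pd i (\<lambda>z. F z $ a $ b) x = F' $ a $ b"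
  unfolding mhd_def by (auto intro: hd_pd)

lemma vhd_mulv:
  fixes F :: "real^'i::finite \<Rightarrow> real^'m::finite^'r"
  assumes "mhd i F x F'" "vhd i v x v'"
  shows "vhd i (\<lambda>z. F z *v v z) x (F' *v v x + F x *v v')"
  unfolding vhd_def matrix_vector_mult_def
proof (intro allI)
  fix a
  have "ldr i (\<lambda>z. \<Sum>k\<in>UNIV. F z $ a $ k * v z $ k) x (\<Sum>k\<in>UNIV. F' $ a $ k * v x $ k + F x $ a $ k * v' $ k)"
    using assms unfolding mhd_def vhd_def by (intro hd_sum hd_mult) auto
  then show "ldr i (\<lambda>z. (\<chi> j. \<Sum>k\<in>UNIV. F z $ j $ k * v z $ k) $ a) x
     (((\<chi> j. \<Sum>k\<in>UNIV. F' $ j $ k * v x $ k) + (\<chi> j. \<Sum>k\<in>UNIV. F x $ j $ k * v' $ k)) $ a)"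
    by (simp add: sum.distrib)
qed

lemma mhd_outer:
  assumes "vhd i u x u'" "vhd i v x v'"
  shows "mhd i (\<lambda>z. outer (u z) (v z)) x (outer u' (v x) + outer (u x) v')"
  using assms unfolding mhd_def vhd_def outer_def by (auto intro: hd_mult)

lemma vhd_add: "vhd i u x u' \<Longrightarrow> vhd i v x v' \<Longrightarrow> vhd i (\<lambda>z. u z + v z) x (u' + v')"
  unfolding vhd_def by (auto intro: hd_add)

lemma vhd_const: "vhd i (\<lambda>z. c) x 0"
  unfolding vhd_def by auto

definition blk :: "real^'n^'n \<Rightarrow> real^'n^'n \<Rightarrow> real^'n^'n \<Rightarrow> real^'n^'n \<Rightarrow> real^('n::finite+'n)^('n+'n)" where
  "blk A B C D = (\<chi> a b. case a of Inl i \<Rightarrow> (case b of Inl j \<Rightarrow> A$i$j | Inr j \<Rightarrow> B$i$j)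
                                    | Inr i \<Rightarrow> (case b of Inl j \<Rightarrow> C$i$j | Inr j \<Rightarrow> D$i$j))"

lemma blk_nth[simp]:
  "blk A B C D $ Inl i $ Inl j = A$i$j" "blk A B C D $ Inl i $ Inr j = B$i$j"
  "blk A B C D $ Inr i $ Inl j = C$i$j" "blk A B C D $ Inr i $ Inr j = D$i$j"
  unfolding blk_def by simp_all

lemma sum_UNIV_plus: "(\<Sum>a\<in>(UNIV::('a::finite+'b::finite) set). f a) = (\<Sum>i\<in>UNIV. f (Inl i)) + (\<Sum>j\<in>UNIV. f (Inr j))"
  by (subst UNIV_Plus_UNIV[symmetric], subst sum.Plus) (auto simp: o_def)

lemma blk_eq_iff: "M = blk A B C D \<longleftrightarrow> (\<forall>i j. M$Inl i$Inl j = A$i$j \<and> M$Inl i$Inr j = B$i$j \<and> M$Inr i$Inl j = C$i$j \<and> M$Inr i$Inr j = D$i$j)"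
  unfolding vec_eq_iff by (auto simp: blk_def split: sum.splits)

lemma blk_mult: "blk A B C D ** blk A' B' C' D' = blk (A**A' + B**C') (A**B' + B**D') (C**A' + D**C') (C**B' + D**D')"
  unfolding blk_eq_iff by (simp add: matrix_matrix_mult_def sum_UNIV_plus)

lemma blk_transpose: "transpose (blk A B C D) = blk (transpose A) (transpose C) (transpose B) (transpose D)"
  unfolding blk_eq_iff by (simp add: transpose_def)

lemma trace_blk: "trace (blk A B C D) = trace A + trace D"
  unfolding trace_def by (simp add: sum_UNIV_plus)

lemma blk_add: "blk A B C D + blk A' B' C' D' = blk (A+A') (B+B') (C+C') (D+D')"
  unfolding blk_eq_iff by simp

lemma blk_one: "mat 1 = blk (mat 1) 0 0 (mat 1)"
  unfolding blk_eq_iff by (simp add: mat_def)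

lemma blk_zero: "0 = blk 0 0 0 0"
  unfolding blk_eq_iff by simp

lemma mhd_blk: "mhd i A x A' \<Longrightarrow> mhd i B x B' \<Longrightarrow> mhd i C x C' \<Longrightarrow> mhd i D x D' \<Longrightarrow>
   mhd i (\<lambda>z. blk (A z) (B z) (C z) (D z)) x (blk A' B' C' D')"
  unfolding mhd_def by (auto simp: blk_def split: sum.splits)

lemma matrix_inv_eq:
  fixes A B :: "real^'n::finite^'n"
  assumes "A ** B = mat 1"
  shows "matrix_inv A = B"
proof -
  have BA: "B ** A = mat 1" using assms matrix_left_right_inverse by blast
  have ex: "\<exists>A'. A ** A' = mat 1 \<and> A' ** A = mat 1" using assms BA by blast
  define C where "C = matrix_inv A"
  have C: "A ** C = mat 1 \<and> C ** A = mat 1"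
    unfolding C_def matrix_inv_def using someI_ex[OF ex] by blast
  have "C = C ** (A ** B)" using assms by simp
  also have "\<dots> = (C ** A) ** B" by (simp add: matrix_mul_assoc)
  also have "\<dots> = B" using C by simp
  finally show ?thesis unfolding C_def .
qed

lemma matrix_inv_both:
  fixes A B :: "real^'n::finite^'n"
  assumes "A ** B = mat 1"
  shows "A ** matrix_inv A = mat 1" "matrix_inv A ** A = mat 1"
  using matrix_inv_eq[OF assms] assms matrix_left_right_inverse by auto

lemma mat1_nth: "(mat 1 :: real^'n^'n) $ i $ j = (if i = j then 1 else 0)"
  by (simp add: mat_def)

lemma chr_trace:
  fixes G :: "real^'k::finite \<Rightarrow> real^'k^'k"
  assumes S: "open S" "p \<in> S" "\<And>z. z \<in> S \<Longrightarrow> matrix_inv (G z) ** G z = mat 1"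
    and sym: "transpose (matrix_inv (G p)) = matrix_inv (G p)"
    and dG: "\<And>a. mhd a G p (dG a)"
    and dGi: "\<And>a e. ldr a (\<lambda>z. matrix_inv (G z) $ c $ e) p (dGi a $ e)"
  shows "(\<Sum>a\<in>UNIV. \<Sum>b\<in>UNIV. matrix_inv (G p) $ a $ b * christoffel G p c a b)
     = - (\<Sum>a\<in>UNIV. dGi a $ a) - (1/2) * (\<Sum>a\<in>UNIV. matrix_inv (G p) $ c $ a * trace (matrix_inv (G p) ** dG a))"
proof -
  define g where "g = matrix_inv (G p)"
  have gsym: "g $ a $ b = g $ b $ a" for a b
  proof -
    have "transpose g $ b $ a = g $ b $ a" using sym unfolding g_def by simp
    then show ?thesis unfolding transpose_def by simp
  qed
  have gG: "g ** G p = mat 1" using S unfolding g_def by auto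
  have Gg: "G p ** g = mat 1" using gG matrix_left_right_inverse by blast
  have pdG: "pd i (\<lambda>z. G z $ m $ j) p = dG i $ m $ j" for i m j using dG mhd_pd by blast
  have step1: "(\<Sum>b\<in>UNIV. dGi a $ b * G p $ b $ e + g $ c $ b * dG a $ b $ e) = 0" for a e
  proof -
    have "ldr a (\<lambda>z. \<Sum>b\<in>UNIV. matrix_inv (G z) $ c $ b * G z $ b $ e) p
             (\<Sum>b\<in>UNIV. dGi a $ b * G p $ b $ e + matrix_inv (G p) $ c $ b * dG a $ b $ e)"
      using dG dGi unfolding mhd_def by (intro hd_sum hd_mult) auto
    moreover have "ldr a (\<lambda>z. \<Sum>b\<in>UNIV. matrix_inv (G z) $ c $ b * G z $ b $ e) p 0"
    proof (rule hd_const_ev[OF S(1,2)])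
      fix z assume "z \<in> S"
      then have 1: "(matrix_inv (G z) ** G z) $ c $ e = (mat 1 :: real^'k^'k) $ c $ e" using S by simp
      have 2: "(\<Sum>b\<in>UNIV. matrix_inv (G z) $ c $ b * G z $ b $ e) = (matrix_inv (G z) ** G z) $ c $ e"
        by (simp only: matrix_matrix_mult_def vec_lambda_beta)
      show "(\<Sum>b\<in>UNIV. matrix_inv (G z) $ c $ b * G z $ b $ e) = (mat 1 :: real^'k^'k) $ c $ e"
        using 2 1 by (rule trans)
    qed
    ultimately show ?thesis unfolding g_def by (rule hd_unique)
  qed
  have step2: "dGi a $ d = - (\<Sum>b\<in>UNIV. \<Sum>e\<in>UNIV. g $ c $ b * dG a $ b $ e * g $ e $ d)" for a d
  proof -
    have "(\<Sum>e\<in>UNIV. (\<Sum>b\<in>UNIV. dGi a $ b * G p $ b $ e + g $ c $ b * dG a $ b $ e) * g $ e $ d) = 0"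
      using step1 by simp
    then have "(\<Sum>e\<in>UNIV. \<Sum>b\<in>UNIV. dGi a $ b * G p $ b $ e * g $ e $ d)
        + (\<Sum>e\<in>UNIV. \<Sum>b\<in>UNIV. g $ c $ b * dG a $ b $ e * g $ e $ d) = 0"
      by (simp add: sum_distrib_right sum.distrib distrib_right)
    moreover have "(\<Sum>e\<in>UNIV. \<Sum>b\<in>UNIV. dGi a $ b * G p $ b $ e * g $ e $ d) = dGi a $ d"
    proof -
      have "(\<Sum>e\<in>UNIV. \<Sum>b\<in>UNIV. dGi a $ b * G p $ b $ e * g $ e $ d)
          = (\<Sum>b\<in>UNIV. dGi a $ b * (\<Sum>e\<in>UNIV. G p $ b $ e * g $ e $ d))"
        by (subst sum.swap) (simp add: sum_distrib_left mult.assoc)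
      also have "\<dots> = (\<Sum>b\<in>UNIV. dGi a $ b * (if b = d then 1 else 0))"
      proof (rule sum.cong[OF refl])
        fix b
        have "(\<Sum>e\<in>UNIV. G p $ b $ e * g $ e $ d) = (G p ** g) $ b $ d"
          by (simp only: matrix_matrix_mult_def vec_lambda_beta)
        also have "\<dots> = (if b = d then 1 else 0)" using Gg by (simp add: mat1_nth)
        finally show "dGi a $ b * (\<Sum>e\<in>UNIV. G p $ b $ e * g $ e $ d) = dGi a $ b * (if b = d then 1 else 0)"
          by simp
      qed
      also have "\<dots> = (\<Sum>b\<in>UNIV. if b = d then dGi a $ b else 0)" by (intro sum.cong) auto
      also have "\<dots> = dGi a $ d" by simp
      finally show ?thesis .
    qed
    moreover have "(\<Sum>e\<in>UNIV. \<Sum>b\<in>UNIV. g $ c $ b * dG a $ b $ e * g $ e $ d) = (\<Sum>b\<in>UNIV. \<Sum>e\<in>UNIV. g $ c $ b * dG a $ b $ e * g $ e $ d)"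
      by (rule sum.swap)
    ultimately show ?thesis by linarith
  qed
  define X1 where "X1 = (\<Sum>a\<in>UNIV. \<Sum>b\<in>UNIV. \<Sum>m\<in>UNIV. g $ a $ b * (g $ c $ m * dG a $ m $ b))"
  define X2 where "X2 = (\<Sum>a\<in>UNIV. \<Sum>b\<in>UNIV. \<Sum>m\<in>UNIV. g $ a $ b * (g $ c $ m * dG b $ m $ a))"
  define X3 where "X3 = (\<Sum>a\<in>UNIV. \<Sum>b\<in>UNIV. \<Sum>m\<in>UNIV. g $ a $ b * (g $ c $ m * dG m $ a $ b))"
  have L1: "g $ a $ b * christoffel G p c a b = (1/2) * ((\<Sum>m\<in>UNIV. g $ a $ b * (g $ c $ m * dG a $ m $ b))
      + (\<Sum>m\<in>UNIV. g $ a $ b * (g $ c $ m * dG b $ m $ a)) - (\<Sum>m\<in>UNIV. g $ a $ b * (g $ c $ m * dG m $ a $ b)))" for a b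
    unfolding christoffel_def pdG g_def[symmetric]
    by (simp add: sum_distrib_left sum.distrib sum_subtractf algebra_simps)
  have L: "(\<Sum>a\<in>UNIV. \<Sum>b\<in>UNIV. g $ a $ b * christoffel G p c a b) = (1/2) * (X1 + X2 - X3)"
    unfolding L1 X1_def X2_def X3_def
    by (simp only: sum_distrib_left[symmetric] sum.distrib sum_subtractf)
  have "X2 = (\<Sum>b\<in>UNIV. \<Sum>a\<in>UNIV. \<Sum>m\<in>UNIV. g $ a $ b * (g $ c $ m * dG b $ m $ a))"
    unfolding X2_def by (rule sum.swap)
  also have "\<dots> = X1" unfolding X1_def
    by (intro sum.cong refl) (metis gsym)
  finally have "X2 = X1" .
  have X3: "X3 = (\<Sum>m\<in>UNIV. g $ c $ m * trace (g ** dG m))"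
  proof -
    have "X3 = (\<Sum>a\<in>UNIV. \<Sum>m\<in>UNIV. \<Sum>b\<in>UNIV. g $ a $ b * (g $ c $ m * dG m $ a $ b))"
      unfolding X3_def by (rule sum.cong[OF refl], rule sum.swap)
    also have "\<dots> = (\<Sum>m\<in>UNIV. \<Sum>a\<in>UNIV. \<Sum>b\<in>UNIV. g $ a $ b * (g $ c $ m * dG m $ a $ b))"
      by (rule sum.swap)
    also have "\<dots> = (\<Sum>m\<in>UNIV. g $ c $ m * (\<Sum>a\<in>UNIV. \<Sum>b\<in>UNIV. g $ a $ b * dG m $ a $ b))"
      by (simp add: sum_distrib_left algebra_simps)
    also have "\<dots> = (\<Sum>m\<in>UNIV. g $ c $ m * (\<Sum>b\<in>UNIV. \<Sum>a\<in>UNIV. g $ b $ a * dG m $ a $ b))"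
    proof -
      have "(\<Sum>a\<in>UNIV. \<Sum>b\<in>UNIV. g $ a $ b * dG m $ a $ b) = (\<Sum>b\<in>UNIV. \<Sum>a\<in>UNIV. g $ b $ a * dG m $ a $ b)" for m
        by (rule trans[OF sum.swap]) (intro sum.cong refl, metis gsym)
      then show ?thesis by simp
    qed
    also have "\<dots> = (\<Sum>m\<in>UNIV. g $ c $ m * trace (g ** dG m))"
      by (simp only: trace_def matrix_matrix_mult_def vec_lambda_beta)
    finally show ?thesis .
  qed
  have X1: "X1 = - (\<Sum>a\<in>UNIV. dGi a $ a)"
  proof -
    have "X1 = (\<Sum>a\<in>UNIV. \<Sum>b\<in>UNIV. \<Sum>m\<in>UNIV. g $ c $ m * dG a $ m $ b * g $ b $ a)"
      unfolding X1_def by (intro sum.cong refl) (simp add: gsym[of a b for a b] mult.commute mult.left_commute)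
    also have "\<dots> = (\<Sum>a\<in>UNIV. \<Sum>m\<in>UNIV. \<Sum>b\<in>UNIV. g $ c $ m * dG a $ m $ b * g $ b $ a)"
      by (rule sum.cong[OF refl], rule sum.swap)
    also have "\<dots> = (\<Sum>a\<in>UNIV. - dGi a $ a)" using step2 by simp
    finally show ?thesis by (simp add: sum_negf)
  qed
  show ?thesis using L \<open>X2 = X1\<close> X1 X3 unfolding g_def by simp
qed

lemma posdef_inv:
  fixes A :: "real^'n::finite^'n"
  assumes "\<forall>v. v \<noteq> 0 \<longrightarrow> v \<bullet> (A *v v) > 0"
  shows "A ** matrix_inv A = mat 1"
proof -
  have "inj ((*v) A)"
  proof (rule injI)
    fix u v assume "A *v u = A *v v"
    then have "A *v (u - v) = 0" by (simp add: matrix_vector_mult_diff_distrib)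
    then have "\<not> (u - v \<noteq> 0)" using assms by (metis inner_zero_right less_irrefl)
    then show "u = v" by simp
  qed
  then have "det A \<noteq> 0" using det_nz_iff_inj[of "(*v) A"] by (simp add: matrix_vector_mul_linear)
  then have "invertible A" using invertible_det_nz by blast
  then obtain B where "A ** B = mat 1" unfolding invertible_def by blast
  then show ?thesis using matrix_inv_both by blast
qed

lemma sym_inv:
  fixes A :: "real^'n::finite^'n"
  assumes "A ** matrix_inv A = mat 1" "transpose A = A"
  shows "transpose (matrix_inv A) = matrix_inv A"
proof -
  have "matrix_inv A ** A = mat 1" using assms(1) matrix_left_right_inverse by blast
  then have "transpose (matrix_inv A ** A) = mat 1" by (simp add: transpose_mat)
  then have "A ** transpose (matrix_inv A) = mat 1" using assms(2) by (simp add: matrix_transpose_mul)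
  then show ?thesis using matrix_inv_eq by metis
qed

lemma cramer_inv:
  fixes A :: "real^'n::finite^'n"
  assumes "A ** matrix_inv A = mat 1"
  shows "matrix_inv A $ i $ j = det (\<chi> r s. if s = i then (if r = j then 1 else 0) else A$r$s) / det A"
proof -
  have "invertible A" using assms unfolding invertible_def using matrix_left_right_inverse by blast
  then have d: "det A \<noteq> 0" using invertible_det_nz by blast
  define x where "x = (\<chi> k. matrix_inv A $ k $ j)"
  define b :: "real^'n" where "b = (\<chi> r. if r = j then 1 else 0)"
  have bj: "b $ r = (if r = j then 1 else 0)" for r unfolding b_def by simp
  have "A *v x = b"
  proof -
    have "(A *v x) $ r = (A ** matrix_inv A) $ r $ j" for r
      by (simp add: x_def matrix_vector_mult_def matrix_matrix_mult_def)
    then show ?thesis using assms by (simp add: vec_eq_iff bj mat1_nth)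
  qed
  then have "x = (\<chi> k. det(\<chi> r s. if s=k then b$r else A$r$s) / det A)" using cramer[OF d] by blast
  then have "x $ i = det(\<chi> r s. if s=i then b$r else A$r$s) / det A" by simp
  moreover have "(\<chi> r s. if s=i then b$r else A$r$s) = (\<chi> r s. if s = i then (if r = j then 1 else 0) else A$r$s)"
    apply (rule arg_cong[where f=vec_lambda], rule ext)
    apply (rule arg_cong[where f=vec_lambda], rule ext)
    apply (simp add: bj)
    done
  ultimately show ?thesis by (simp add: x_def)
qed

lemma differentiable_prod':
  fixes f :: "'i \<Rightarrow> real^'n::finite \<Rightarrow> real"
  shows "finite I \<Longrightarrow> (\<And>i. i \<in> I \<Longrightarrow> f i differentiable (at x)) \<Longrightarrow> (\<lambda>z. \<Prod>i\<in>I. f i z) differentiable (at x)"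
proof (induction I rule: finite_induct)
  case empty then show ?case by simp
next
  case (insert a F)
  then show ?case by (simp add: differentiable_mult)
qed

lemma det_differentiable:
  fixes M :: "real^'n::finite \<Rightarrow> real^'m::finite^'m"
  assumes "\<And>a b. (\<lambda>z. M z $ a $ b) differentiable (at x)"
  shows "(\<lambda>z. det (M z)) differentiable (at x)"
proof -
  have P: "(\<lambda>z. \<Prod>i\<in>UNIV. M z $ i $ p i) differentiable (at x)" for p :: "'m \<Rightarrow> 'm"
    by (rule differentiable_prod'[where f="\<lambda>i z. M z $ i $ p i"]) (auto intro: assms)
  show ?thesis unfolding det_def by (intro differentiable_sum ballI differentiable_mult differentiable_const P finite_permutations finite)
qed

lemma riem_diff:
  assumes "riem_metric U G" "open U" "x \<in> U"
  shows "(\<lambda>z. G z $ a $ b) differentiable (at x)"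
    and "(\<lambda>z. pd k (\<lambda>w. G w $ a $ b) z) differentiable (at x)"
proof -
  have s: "smooth_on U (\<lambda>z. G z $ a $ b)" using assms(1) unfolding riem_metric_def by blast
  have "(foldr pd [] (\<lambda>z. G z $ a $ b)) differentiable_on U" using s unfolding smooth_on_def by blast
  then show "(\<lambda>z. G z $ a $ b) differentiable (at x)" using assms(2,3) differentiable_on_eq_differentiable_at by auto
  have "(foldr pd [k] (\<lambda>z. G z $ a $ b)) differentiable_on U" using s unfolding smooth_on_def by blast
  then have "(pd k (\<lambda>z. G z $ a $ b)) differentiable (at x)" using assms(2,3) differentiable_on_eq_differentiable_at by auto
  then show "(\<lambda>z. pd k (\<lambda>w. G w $ a $ b) z) differentiable (at x)" by (simp add: eta_contract_eq)
qed

lemma riem_inv: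
  assumes "riem_metric U G" "x \<in> U"
  shows "G x ** matrix_inv (G x) = mat 1" "matrix_inv (G x) ** G x = mat 1"
    "transpose (matrix_inv (G x)) = matrix_inv (G x)"
proof -
  show 1: "G x ** matrix_inv (G x) = mat 1" using assms unfolding riem_metric_def by (intro posdef_inv) auto
  then show "matrix_inv (G x) ** G x = mat 1" using matrix_left_right_inverse by blast
  show "transpose (matrix_inv (G x)) = matrix_inv (G x)" using 1 assms unfolding riem_metric_def
    by (intro sym_inv) auto
qed

lemma inv_hd:
  assumes "riem_metric U G" "open U" "x \<in> U"
  shows "ldr k (\<lambda>z. matrix_inv (G z) $ a $ b) x (pd k (\<lambda>z. matrix_inv (G z) $ a $ b) x)"
proof -
  define C where "C z = det (\<chi> r s. if s = a then (if r = b then 1 else 0) else G z$r$s) / det (G z)" for z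
  have eq: "matrix_inv (G z) $ a $ b = C z" if "z \<in> U" for z
    unfolding C_def using riem_inv(1)[OF assms(1) that] by (rule cramer_inv)
  have dx: "det (G x) \<noteq> 0"
    using riem_inv(1)[OF assms(1,3)] invertible_det_nz unfolding invertible_def
    using matrix_left_right_inverse by blast
  have "C differentiable (at x)" unfolding C_def
  proof (intro differentiable_divide det_differentiable dx)
    fix r s
    show "(\<lambda>z. (\<chi> r s. if s = a then (if r = b then 1 else 0) else G z$r$s) $ r $ s) differentiable (at x)"
      using riem_diff(1)[OF assms] by (cases "s = a") auto
    show "(\<lambda>z. G z $ r $ s) differentiable (at x)" using riem_diff(1)[OF assms] .
  qed
  then have h1: "ldr k C x (pd k C x)" by (rule hd_differentiable)
  have "ldr k (\<lambda>z. matrix_inv (G z) $ a $ b) x (pd k C x)"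
    by (rule hd_local[OF assms(2,3) _ h1]) (simp add: eq)
  then show ?thesis by (rule hd_pd')
qed

lemma christoffel_hd:
  assumes "riem_metric U G" "open U" "x \<in> U"
  shows "ldr k (\<lambda>z. christoffel G z m i j) x (pd k (\<lambda>z. christoffel G z m i j) x)"
proof -
  have "ldr k (\<lambda>z. christoffel G z m i j) x
     ((1/2) * (\<Sum>n\<in>UNIV. pd k (\<lambda>z. matrix_inv (G z) $ m $ n) x *
      (pd i (\<lambda>z. G z $ n $ j) x + pd j (\<lambda>z. G z $ n $ i) x - pd n (\<lambda>z. G z $ i $ j) x)
      + matrix_inv (G x) $ m $ n * (pd k (\<lambda>z. pd i (\<lambda>w. G w $ n $ j) z) x
         + pd k (\<lambda>z. pd j (\<lambda>w. G w $ n $ i) z) x - pd k (\<lambda>z. pd n (\<lambda>w. G w $ i $ j) z) x)))"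
    unfolding christoffel_def
    by (intro hd_cmult hd_sum hd_mult hd_add hd_diff inv_hd[OF assms] hd_differentiable riem_diff[OF assms]) auto
  then show ?thesis by (rule hd_pd')
qed

lemma pair_tb_nth[simp]: "pair_tb u v $ Inl i = u $ i" "pair_tb u v $ Inr i = v $ i"
  unfolding pair_tb_def by simp_all

lemma base_pair[simp]: "base (pair_tb u v) = u" "fib (pair_tb u v) = v"
  unfolding base_def fib_def by (simp_all add: vec_eq_iff)

lemma base_nth[simp]: "base p $ i = p $ Inl i" and fib_nth[simp]: "fib p $ i = p $ Inr i"
  unfolding base_def fib_def by simp_all

lemma pair_eq_iff: "p = pair_tb u v \<longleftrightarrow> (\<forall>i. p $ Inl i = u $ i \<and> p $ Inr i = v $ i)"
  unfolding vec_eq_iff by (auto simp: pair_tb_def split: sum.splits)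

lemma inner_sum_plus: "(x::real^('n::finite+'n)) \<bullet> y = (\<Sum>i\<in>UNIV. x $ Inl i * y $ Inl i) + (\<Sum>i\<in>UNIV. x $ Inr i * y $ Inr i)"
  unfolding inner_vec_def by (simp add: sum_UNIV_plus)

lemma inner_pair: "pair_tb u v \<bullet> pair_tb u' v' = u \<bullet> u' + v \<bullet> v'"
  unfolding inner_sum_plus by (simp add: inner_vec_def)

lemma blk_mulv: "blk A B C D *v pair_tb u v = pair_tb (A *v u + B *v v) (C *v u + D *v v)"
  unfolding pair_eq_iff by (simp add: matrix_vector_mult_def sum_UNIV_plus)

definition Nmat :: "(real^'n::finite \<Rightarrow> real^'n^'n) \<Rightarrow> real^'n \<Rightarrow> real^'n \<Rightarrow> real^'n^'n" where
  "Nmat G x y = (\<chi> m i. \<Sum>j\<in>UNIV. christoffel G x m i j * y $ j)"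

lemma conn_Nmat: "conn G x y X = Nmat G x y *v X"
  unfolding conn_def Nmat_def matrix_vector_mult_def vec_eq_iff
  by (simp add: sum_distrib_right sum_distrib_left mult.commute mult.left_commute)

definition Pm :: "real^'n^'n \<Rightarrow> real^('n::finite+'n)^('n+'n)" where
  "Pm N = blk (mat 1) 0 N (mat 1)"

lemma Pm_pair: "Pm N *v p = pair_tb (base p) (fib p + N *v base p)"
proof -
  have "p = pair_tb (base p) (fib p)" unfolding pair_eq_iff by simp
  then have "Pm N *v p = Pm N *v pair_tb (base p) (fib p)" by simp
  also have "\<dots> = pair_tb (base p) (fib p + N *v base p)" unfolding Pm_def blk_mulv by (simp add: add.commute)
  finally show ?thesis .
qed

definition Km :: "real \<Rightarrow> real^'n^'n \<Rightarrow> real^'n \<Rightarrow> real^'n::finite^'n" where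
  "Km \<delta> g w = g + (\<delta>^2) *\<^sub>R outer w w"

lemma outer_mulv: "outer u v *v x = (v \<bullet> x) *\<^sub>R u"
  unfolding outer_def matrix_vector_mult_def inner_vec_def vec_eq_iff
  by (simp add: sum_distrib_left mult.commute mult.left_commute)

lemma scaleR_mat_mulv: "(c *\<^sub>R (A::real^'n::finite^'m)) *v v = c *\<^sub>R (A *v v)"
  unfolding matrix_vector_mult_def vec_eq_iff by (simp add: real_scaleR_def sum_distrib_left mult.assoc)

lemma Km_inner: "v \<bullet> (Km \<delta> g w *v v') = v \<bullet> (g *v v') + \<delta>^2 * (v \<bullet> w) * (v' \<bullet> w)"
  unfolding Km_def by (simp add: matrix_vector_mult_add_rdistrib scaleR_mat_mulv outer_mulv
      inner_add_right inner_commute)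

definition Dm :: "real^'n^'n \<Rightarrow> real^'n^'n \<Rightarrow> real^('n::finite+'n)^('n+'n)" where
  "Dm g K = blk g 0 0 K"

lemma mulv_axis: "M *v axis a 1 = (\<chi> c. M $ c $ a)"
  unfolding matrix_vector_mult_def axis_def vec_eq_iff
  by (simp add: if_distrib[of "\<lambda>x. _ * x"] cong: if_cong)

lemma quad_entry: "(transpose M ** N ** M) $ a $ b = (M *v axis a 1) \<bullet> (N *v (M *v axis b 1))"
proof -
  have "(transpose M ** N ** M) $ a $ b = (\<Sum>k\<in>UNIV. (\<Sum>n\<in>UNIV. M $ n $ a * N $ n $ k) * M $ k $ b)"
    by (simp add: matrix_matrix_mult_def transpose_def)
  also have "\<dots> = (\<Sum>k\<in>UNIV. \<Sum>n\<in>UNIV. M $ n $ a * (N $ n $ k * M $ k $ b))"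
    by (simp add: sum_distrib_right mult.assoc)
  also have "\<dots> = (\<Sum>n\<in>UNIV. \<Sum>k\<in>UNIV. M $ n $ a * (N $ n $ k * M $ k $ b))"
    by (rule sum.swap)
  also have "\<dots> = (M *v axis a 1) \<bullet> (N *v (M *v axis b 1))"
    unfolding mulv_axis by (simp add: matrix_vector_mult_def inner_vec_def sum_distrib_left)
  finally show ?thesis .
qed

definition wv :: "(real^'n::finite \<Rightarrow> real^'n^'n) \<Rightarrow> (real^'n \<Rightarrow> real^'n^'n) \<Rightarrow> real^('n+'n) \<Rightarrow> real^'n" where
  "wv G \<phi> p = G (base p) *v (\<phi> (base p) *v fib p)"

lemma gBS_quad: "gBS \<delta> G \<phi> p \<xi> \<eta> = (Pm (Nmat G (base p) (fib p)) *v \<xi>) \<bullet>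
     (Dm (G (base p)) (Km \<delta> (G (base p)) (wv G \<phi> p)) *v (Pm (Nmat G (base p) (fib p)) *v \<eta>))"
  unfolding gBS_def Let_def Pm_pair Dm_def blk_mulv inner_pair Km_inner hcomp_def vcomp_def conn_Nmat gm_def wv_def
  by (simp add: inner_commute Km_inner)

lemma gBS_matrix_eq: "gBS_matrix \<delta> G \<phi> p = transpose (Pm (Nmat G (base p) (fib p))) **
    Dm (G (base p)) (Km \<delta> (G (base p)) (wv G \<phi> p)) ** Pm (Nmat G (base p) (fib p))"
  unfolding gBS_matrix_def vec_eq_iff quad_entry gBS_quad by simp

lemma Pm_inv: "Pm N ** Pm (- N) = mat 1" "Pm (- N) ** Pm N = mat 1"
  unfolding Pm_def blk_mult by (simp_all add: blk_one)

lemma Dm_inv: "g ** gi = mat 1 \<Longrightarrow> K ** Ki = mat 1 \<Longrightarrow> Dm g K ** Dm gi Ki = mat 1"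
  unfolding Dm_def blk_mult by (simp add: blk_one)

lemma G_inv:
  assumes "D ** Di = mat 1" "P ** Q = mat 1" "Q ** P = mat 1"
  shows "(transpose P ** D ** P) ** (Q ** Di ** transpose Q) = (mat 1 :: real^'k::finite^'k)"
proof -
  have "(transpose P ** D ** P) ** (Q ** Di ** transpose Q) = transpose P ** D ** (P ** Q) ** Di ** transpose Q"
    by (simp add: matrix_mul_assoc)
  also have "\<dots> = transpose P ** D ** Di ** transpose Q" by (simp only: assms(2) matrix_mul_rid)
  also have "\<dots> = transpose P ** (D ** Di) ** transpose Q" by (simp add: matrix_mul_assoc)
  also have "\<dots> = transpose P ** transpose Q" using assms by simp
  also have "\<dots> = transpose (Q ** P)" by (rule matrix_transpose_mul[symmetric])
  also have "\<dots> = mat 1" by (simp only: assms(3) transpose_mat)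
  finally show ?thesis .
qed

lemma transpose_zero[simp]: "transpose (0::real^'a::finite^'b::finite) = 0"
  by (simp add: transpose_def vec_eq_iff)

lemma transpose_blk_I: "transpose (Pm N) = blk (mat 1) (transpose N) 0 (mat 1)"
  unfolding Pm_def blk_transpose by simp

lemma Gi_blk: "Pm (- N) ** Dm gi Ki ** transpose (Pm (- N)) =
   blk gi (gi ** transpose (- N)) ((- N) ** gi) ((- N) ** gi ** transpose (- N) + Ki)"
  unfolding transpose_blk_I unfolding Pm_def Dm_def blk_mult by simp

lemma Gi_row: "(Pm (- N) ** Dm gi Ki ** transpose (Pm (- N))) $ Inl l $ Inl i = gi $ l $ i"
   "(Pm (- N) ** Dm gi Ki ** transpose (Pm (- N))) $ Inl l $ Inr b = - (\<Sum>j\<in>UNIV. gi $ l $ j * N $ b $ j)"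
  unfolding Gi_blk by (simp_all add: matrix_matrix_mult_def transpose_def sum_negf)

lemma trace_transpose': "trace (transpose A) = trace (A::real^'k::finite^'k)"
  unfolding trace_def transpose_def by simp

lemma trace_Pm: "trace (Pm (- N) ** blk 0 0 X 0) = 0"
  unfolding Pm_def blk_mult trace_blk by (simp add: trace_def)

lemma matrix_add_rdistrib': "((A::real^'m::finite^'n) + B) ** (C::real^'k^'m) = A ** C + B ** C"
  by (simp add: matrix_matrix_mult_def vec_eq_iff sum.distrib distrib_right)

lemma trace_PDP:
  fixes P Q D Di dP dD :: "real^'k::finite^'k"
  assumes "P ** Q = mat 1" "Q ** P = mat 1" "Di ** D = mat 1" "trace (Q ** dP) = 0"
  shows "trace ((Q ** Di ** transpose Q) ** ((transpose dP ** D + transpose P ** dD) ** P + (transpose P ** D) ** dP))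
    = trace (Di ** dD)"
proof -
  have tP: "transpose Q ** transpose P = mat 1"
    by (simp only: matrix_transpose_mul[symmetric] assms(1) transpose_mat)
  have T1: "trace ((Q ** Di ** transpose Q) ** (transpose dP ** D ** P)) = 0"
  proof -
    have "trace ((Q ** Di ** transpose Q) ** (transpose dP ** D ** P)) = trace ((Q ** Di ** transpose Q ** transpose dP) ** (D ** P))"
      by (simp add: matrix_mul_assoc)
    also have "\<dots> = trace ((D ** P) ** (Q ** Di ** transpose Q ** transpose dP))"
      by (rule trace_mul_sym)
    also have "\<dots> = trace ((D ** (P ** Q) ** Di) ** transpose Q ** transpose dP)"
      by (simp add: matrix_mul_assoc)
    also have "\<dots> = trace ((D ** Di) ** transpose Q ** transpose dP)" by (simp only: assms(1) matrix_mul_rid)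
    also have "\<dots> = trace (transpose Q ** transpose dP)"
    proof -
      have "D ** Di = mat 1" using assms(3) matrix_left_right_inverse by blast
      then show ?thesis by simp
    qed
    also have "\<dots> = trace (transpose (dP ** Q))" by (simp add: matrix_transpose_mul)
    also have "\<dots> = trace (Q ** dP)" by (simp only: trace_transpose') (rule trace_mul_sym)
    finally show ?thesis using assms by simp
  qed
  have T2: "trace ((Q ** Di ** transpose Q) ** (transpose P ** dD ** P)) = trace (Di ** dD)"
  proof -
    have "trace ((Q ** Di ** transpose Q) ** (transpose P ** dD ** P)) = trace (Q ** Di ** (transpose Q ** transpose P) ** dD ** P)"
      by (simp add: matrix_mul_assoc)
    also have "\<dots> = trace (Q ** Di ** mat 1 ** dD ** P)" by (simp only: tP)
    also have "\<dots> = trace (Q ** (Di ** dD ** P))" by (simp add: matrix_mul_assoc)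
    also have "\<dots> = trace ((Di ** dD ** P) ** Q)" by (rule trace_mul_sym)
    also have "\<dots> = trace (Di ** dD ** (P ** Q))" by (simp add: matrix_mul_assoc)
    also have "\<dots> = trace (Di ** dD)" by (simp only: assms(1) matrix_mul_rid)
    finally show ?thesis .
  qed
  have T3: "trace ((Q ** Di ** transpose Q) ** (transpose P ** D ** dP)) = 0"
  proof -
    have "trace ((Q ** Di ** transpose Q) ** (transpose P ** D ** dP)) = trace (Q ** Di ** (transpose Q ** transpose P) ** D ** dP)"
      by (simp add: matrix_mul_assoc)
    also have "\<dots> = trace (Q ** Di ** mat 1 ** D ** dP)" by (simp only: tP)
    also have "\<dots> = trace (Q ** (Di ** D) ** dP)" by (simp add: matrix_mul_assoc)
    also have "\<dots> = trace (Q ** dP)" by (simp only: assms(3) matrix_mul_rid)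
    finally show ?thesis using assms by simp
  qed
  show ?thesis using T1 T2 T3
    by (simp add: matrix_add_ldistrib matrix_add_rdistrib' trace_add)
qed

definition Gam :: "(real^'n::finite \<Rightarrow> real^'n^'n) \<Rightarrow> real^'n \<Rightarrow> 'n \<Rightarrow> real^'n^'n" where
  "Gam G x i = (\<chi> m b. christoffel G x m i b)"

definition mpd :: "'i::finite \<Rightarrow> (real^'i \<Rightarrow> real^'c^'r) \<Rightarrow> real^'i \<Rightarrow> real^'c^'r" where
  "mpd i F x = (\<chi> a b. pd i (\<lambda>z. F z $ a $ b) x)"

lemma riem_sym: "riem_metric U G \<Longrightarrow> x \<in> U \<Longrightarrow> G x $ a $ b = G x $ b $ a"
proof -
  assume "riem_metric U G" "x \<in> U"
  then have "transpose (G x) $ b $ a = G x $ b $ a" unfolding riem_metric_def by simp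
  then show ?thesis unfolding transpose_def by simp
qed

lemma pd_sym:
  assumes "riem_metric U G" "open U" "x \<in> U"
  shows "pd k (\<lambda>z. G z $ a $ b) x = pd k (\<lambda>z. G z $ b $ a) x"
proof -
  have h: "ldr k (\<lambda>z. G z $ a $ b) x (pd k (\<lambda>z. G z $ a $ b) x)"
    by (rule hd_differentiable, rule riem_diff(1)[OF assms])
  have "ldr k (\<lambda>z. G z $ b $ a) x (pd k (\<lambda>z. G z $ a $ b) x)"
    by (rule hd_local[OF assms(2,3) _ h]) (simp add: riem_sym[OF assms(1)])
  then show ?thesis using hd_pd by metis
qed

lemma lower_chr:
  assumes "riem_metric U G" "x \<in> U"
  shows "(\<Sum>m\<in>UNIV. G x $ a $ m * christoffel G x m i b) =
     (1/2) * (pd i (\<lambda>z. G z $ a $ b) x + pd b (\<lambda>z. G z $ a $ i) x - pd a (\<lambda>z. G z $ i $ b) x)"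
proof -
  define gi where "gi = matrix_inv (G x)"
  have I: "G x ** gi = mat 1" unfolding gi_def using riem_inv[OF assms] by simp
  have I': "(\<Sum>m\<in>UNIV. G x $ a $ m * gi $ m $ s) = (if a = s then 1 else 0)" for s
  proof -
    have "(\<Sum>m\<in>UNIV. G x $ a $ m * gi $ m $ s) = (G x ** gi) $ a $ s"
      by (simp only: matrix_matrix_mult_def vec_lambda_beta)
    then show ?thesis using I by (simp add: mat1_nth)
  qed
  define F where "F s = pd i (\<lambda>z. G z $ s $ b) x + pd b (\<lambda>z. G z $ s $ i) x - pd s (\<lambda>z. G z $ i $ b) x" for s
  have "(\<Sum>m\<in>UNIV. G x $ a $ m * christoffel G x m i b) = (\<Sum>m\<in>UNIV. G x $ a $ m * ((1/2) * (\<Sum>s\<in>UNIV. gi $ m $ s * F s)))"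
    unfolding christoffel_def gi_def F_def by simp
  also have "\<dots> = (1/2) * (\<Sum>m\<in>UNIV. \<Sum>s\<in>UNIV. G x $ a $ m * gi $ m $ s * F s)"
    by (simp add: sum_distrib_left mult.assoc mult.left_commute)
  also have "\<dots> = (1/2) * (\<Sum>s\<in>UNIV. \<Sum>m\<in>UNIV. G x $ a $ m * gi $ m $ s * F s)"
    by (subst sum.swap) (rule refl)
  also have "\<dots> = (1/2) * (\<Sum>s\<in>UNIV. (\<Sum>m\<in>UNIV. G x $ a $ m * gi $ m $ s) * F s)"
    by (simp add: sum_distrib_right)
  also have "\<dots> = (1/2) * (\<Sum>s\<in>UNIV. (if a = s then 1 else 0) * F s)"
    by (simp only: I')
  also have "\<dots> = (1/2) * F a" by (simp add: if_distrib[of "\<lambda>x. x * _"] cong: if_cong)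
  finally show ?thesis unfolding F_def .
qed

lemma metric_compat:
  assumes "riem_metric U G" "open U" "x \<in> U"
  shows "mpd i G x = transpose (Gam G x i) ** G x + G x ** Gam G x i"
proof -
  have "pd i (\<lambda>z. G z $ a $ b) x = (\<Sum>m\<in>UNIV. christoffel G x m i a * G x $ m $ b) + (\<Sum>m\<in>UNIV. G x $ a $ m * christoffel G x m i b)" for a b
  proof -
    have "(\<Sum>m\<in>UNIV. christoffel G x m i a * G x $ m $ b) = (\<Sum>m\<in>UNIV. G x $ b $ m * christoffel G x m i a)"
      using riem_sym[OF assms(1,3)] by (simp add: mult.commute)
    then show ?thesis
      unfolding lower_chr[OF assms(1,3)] using pd_sym[OF assms] by (simp add: algebra_simps)
  qed
  then show ?thesis
    unfolding mpd_def Gam_def vec_eq_iff by (simp add: matrix_matrix_mult_def transpose_def)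
qed

lemma trace_compat:
  fixes A Ai T :: "real^'k::finite^'k"
  assumes "A ** Ai = mat 1" "Ai ** A = mat 1"
  shows "trace (Ai ** (transpose T ** A + A ** T)) = 2 * trace T"
proof -
  have "trace (Ai ** (transpose T ** A)) = trace ((transpose T ** A) ** Ai)" by (rule trace_mul_sym)
  also have "\<dots> = trace (transpose T ** (A ** Ai))" by (simp add: matrix_mul_assoc)
  also have "\<dots> = trace T" using assms(1) by (simp add: trace_transpose')
  finally have 1: "trace (Ai ** (transpose T ** A)) = trace T" .
  have 2: "trace (Ai ** (A ** T)) = trace T" by (simp add: matrix_mul_assoc assms(2))
  show ?thesis using 1 2 by (simp add: matrix_add_ldistrib trace_add)
qed

lemma covd_eq:
  assumes "\<forall>x\<in>U. \<forall>i l j. covd_phi G \<phi> x i l j = 0" "x \<in> U"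
  shows "mpd i \<phi> x = \<phi> x ** Gam G x i - Gam G x i ** \<phi> x"
proof -
  have "pd i (\<lambda>z. \<phi> z $ l $ j) x = (\<Sum>m\<in>UNIV. \<phi> x $ l $ m * christoffel G x m i j) - (\<Sum>m\<in>UNIV. christoffel G x l i m * \<phi> x $ m $ j)" for l j
  proof -
    have "covd_phi G \<phi> x i l j = 0" using assms by blast
    then show ?thesis unfolding covd_phi_def by linarith
  qed
  then show ?thesis unfolding mpd_def Gam_def vec_eq_iff by (simp add: matrix_matrix_mult_def)
qed

lemma base_line: "base (p + t *\<^sub>R axis (Inl i) 1) = base p + t *\<^sub>R axis i 1"
  "base (p + t *\<^sub>R axis (Inr j) (1::real)) = base p"
  unfolding vec_eq_iff by (simp_all add: axis_def)

lemma fib_line: "fib (p + t *\<^sub>R axis (Inl i) (1::real)) = fib p"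
  "fib (p + t *\<^sub>R axis (Inr j) 1) = fib p + t *\<^sub>R axis j 1"
  unfolding vec_eq_iff by (simp_all add: axis_def)

lemma hd_lift:
  assumes "\<And>i. ldr i f (base p) (D i)"
  shows "ldr a (\<lambda>q. f (base q)) p (case a of Inl i \<Rightarrow> D i | Inr _ \<Rightarrow> 0)"
proof (cases a)
  case (Inl i)
  then show ?thesis using assms[of i] unfolding ldr_def by (simp add: base_line)
next
  case (Inr j)
  then show ?thesis unfolding ldr_def by (simp add: base_line)
qed

definition dya :: "('n::finite + 'n) \<Rightarrow> real^'n" where
  "dya a = (case a of Inl _ \<Rightarrow> 0 | Inr j \<Rightarrow> axis j 1)"

lemma vhd_fib: "vhd a fib p (dya a)"
  unfolding vhd_def
proof
  fix k
  show "ldr a (\<lambda>z. fib z $ k) p (dya a $ k)"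
  proof (cases a)
    case (Inl i)
    then show ?thesis unfolding ldr_def dya_def by (simp add: fib_line)
  next
    case (Inr j)
    have "((\<lambda>t. p $ Inr k + t * axis j 1 $ k) has_real_derivative axis j 1 $ k) (at 0)"
      by (auto intro!: derivative_eq_intros)
    then show ?thesis using Inr unfolding ldr_def dya_def using fib_line(2)[of p _ j]
      by (simp add: axis_def)
  qed
qed

definition liftm :: "('n::finite \<Rightarrow> 'b::zero) \<Rightarrow> ('n + 'n) \<Rightarrow> 'b" where
  "liftm D a = (case a of Inl i \<Rightarrow> D i | Inr _ \<Rightarrow> 0)"

lemma liftm_simps[simp]: "liftm D (Inl i) = D i" "liftm D (Inr j) = 0"
  unfolding liftm_def by simp_all

lemma liftm_nth: "liftm D a $ r $ c = liftm (\<lambda>i. D i $ r $ c) a"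
  unfolding liftm_def by (cases a) auto

lemma mhd_lift:
  assumes "\<And>i r c. ldr i (\<lambda>z. F z $ r $ c) (base p) (D i $ r $ c)"
  shows "mhd a (\<lambda>q. F (base q)) p (liftm D a)"
  unfolding mhd_def liftm_nth unfolding liftm_def using assms by (intro allI hd_lift)

lemma smooth_diff: "smooth_on U f \<Longrightarrow> open U \<Longrightarrow> x \<in> U \<Longrightarrow> f differentiable (at x)"
proof -
  assume "smooth_on U f" "open U" "x \<in> U"
  then have "(foldr pd [] f) differentiable_on U" unfolding smooth_on_def by blast
  then show ?thesis using \<open>open U\<close> \<open>x \<in> U\<close> differentiable_on_eq_differentiable_at by auto
qed

lemma mhd_mpd:
  assumes "\<And>r c. (\<lambda>z. F z $ r $ c) differentiable (at x)"
  shows "\<And>i r c. ldr i (\<lambda>z. F z $ r $ c) x (mpd i F x $ r $ c)"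
  unfolding mpd_def using assms by (simp add: hd_differentiable)

lemma mhd_of_ex: "(\<And>r c. \<exists>D. ldr a (\<lambda>z. F z $ r $ c) p D) \<Longrightarrow> mhd a F p (mpd a F p)"
  unfolding mhd_def mpd_def using hd_pd' by fastforce

definition Nq where "Nq G q = Nmat G (base q) (fib q)"

lemma mhd_Nq:
  assumes "riem_metric U G" "open U" "base p \<in> U"
  shows "mhd a (Nq G) p (mpd a (Nq G) p)"
proof (rule mhd_of_ex)
  fix r c
  have "ldr a (\<lambda>q. christoffel G (base q) r c j) p (liftm (\<lambda>i. pd i (\<lambda>z. christoffel G z r c j) (base p)) a)" for j
    unfolding liftm_def by (rule hd_lift, rule christoffel_hd[OF assms])
  moreover have "ldr a (\<lambda>q. fib q $ j) p (dya a $ j)" for j using vhd_fib unfolding vhd_def by blast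
  ultimately have "ldr a (\<lambda>q. \<Sum>j\<in>UNIV. christoffel G (base q) r c j * fib q $ j) p
     (\<Sum>j\<in>UNIV. liftm (\<lambda>i. pd i (\<lambda>z. christoffel G z r c j) (base p)) a * fib p $ j + christoffel G (base p) r c j * dya a $ j)"
    by (intro hd_sum hd_mult) auto
  then show "\<exists>D. ldr a (\<lambda>z. Nq G z $ r $ c) p D" unfolding Nq_def Nmat_def by auto
qed

definition dGa :: "(real^'n::finite \<Rightarrow> real^'n^'n) \<Rightarrow> real^'n \<Rightarrow> ('n + 'n) \<Rightarrow> real^'n^'n" where
  "dGa G x a = liftm (\<lambda>i. mpd i G x) a"

definition dwa where
  "dwa G \<phi> p a = dGa G (base p) a *v (\<phi> (base p) *v fib p) + G (base p) *v (dGa \<phi> (base p) a *v fib p + \<phi> (base p) *v dya a)"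

definition dKa where
  "dKa \<delta> G \<phi> p a = dGa G (base p) a + \<delta>^2 *\<^sub>R (outer (dwa G \<phi> p a) (wv G \<phi> p) + outer (wv G \<phi> p) (dwa G \<phi> p a))"

lemma mhd_base:
  assumes "\<And>r c. (\<lambda>z. F z $ r $ c) differentiable (at (base p))"
  shows "mhd a (\<lambda>q. F (base q)) p (dGa F (base p) a)"
  unfolding dGa_def by (rule mhd_lift, rule mhd_mpd[OF assms])

lemma vhd_w:
  assumes "\<And>r c. (\<lambda>z. G z $ r $ c) differentiable (at (base p))"
    "\<And>r c. (\<lambda>z. \<phi> z $ r $ c) differentiable (at (base p))"
  shows "vhd a (wv G \<phi>) p (dwa G \<phi> p a)"
proof -
  have "vhd a (\<lambda>q. \<phi> (base q) *v fib q) p (dGa \<phi> (base p) a *v fib p + \<phi> (base p) *v dya a)"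
    by (rule vhd_mulv[OF mhd_base[OF assms(2)] vhd_fib])
  from vhd_mulv[OF mhd_base[OF assms(1)] this]
  show ?thesis unfolding wv_def[abs_def] dwa_def .
qed

lemma mhd_K:
  assumes "\<And>r c. (\<lambda>z. G z $ r $ c) differentiable (at (base p))"
    "\<And>r c. (\<lambda>z. \<phi> z $ r $ c) differentiable (at (base p))"
  shows "mhd a (\<lambda>q. Km \<delta> (G (base q)) (wv G \<phi> q)) p (dKa \<delta> G \<phi> p a)"
  unfolding Km_def dKa_def
  by (intro mhd_add mhd_base mhd_scale mhd_outer vhd_w assms)

lemma mhd_D:
  assumes "\<And>r c. (\<lambda>z. G z $ r $ c) differentiable (at (base p))"
    "\<And>r c. (\<lambda>z. \<phi> z $ r $ c) differentiable (at (base p))"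
  shows "mhd a (\<lambda>q. Dm (G (base q)) (Km \<delta> (G (base q)) (wv G \<phi> q))) p (blk (dGa G (base p) a) 0 0 (dKa \<delta> G \<phi> p a))"
  unfolding Dm_def
  by (intro mhd_blk mhd_base mhd_K mhd_const assms)

lemma mhd_P:
  assumes "riem_metric U G" "open U" "base p \<in> U"
  shows "mhd a (\<lambda>q. Pm (Nq G q)) p (blk 0 0 (mpd a (Nq G) p) 0)"
  unfolding Pm_def by (intro mhd_blk mhd_const mhd_Nq[OF assms])

lemma Km_posdef:
  assumes "\<forall>v. v \<noteq> 0 \<longrightarrow> v \<bullet> (g *v v) > 0"
  shows "\<forall>v. v \<noteq> 0 \<longrightarrow> v \<bullet> (Km \<delta> g w *v v) > 0"
proof (intro allI impI)
  fix v :: "real^'a" assume "v \<noteq> 0"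
  then have "v \<bullet> (g *v v) > 0" using assms by blast
  moreover have "\<delta>^2 * (v \<bullet> w) * (v \<bullet> w) \<ge> 0" by (simp add: mult.assoc)
  ultimately show "v \<bullet> (Km \<delta> g w *v v) > 0" unfolding Km_inner by linarith
qed

lemma GBS_fun: "gBS_matrix \<delta> G \<phi> = (\<lambda>q. transpose (Pm (Nq G q)) ** Dm (G (base q)) (Km \<delta> (G (base q)) (wv G \<phi> q)) ** Pm (Nq G q))"
  by (rule ext) (simp add: gBS_matrix_eq Nq_def)

lemma K_inv:
  assumes "riem_metric U G" "x \<in> U"
  shows "Km \<delta> (G x) w ** matrix_inv (Km \<delta> (G x) w) = mat 1"
  using assms unfolding riem_metric_def by (intro posdef_inv Km_posdef) auto

lemma GBS_inv:
  assumes "riem_metric U G" "base p \<in> U"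
  shows "gBS_matrix \<delta> G \<phi> p ** (Pm (- Nq G p) ** Dm (matrix_inv (G (base p))) (matrix_inv (Km \<delta> (G (base p)) (wv G \<phi> p))) ** transpose (Pm (- Nq G p))) = mat 1"
    "matrix_inv (gBS_matrix \<delta> G \<phi> p) = Pm (- Nq G p) ** Dm (matrix_inv (G (base p))) (matrix_inv (Km \<delta> (G (base p)) (wv G \<phi> p))) ** transpose (Pm (- Nq G p))"
proof -
  show 1: "gBS_matrix \<delta> G \<phi> p ** (Pm (- Nq G p) ** Dm (matrix_inv (G (base p))) (matrix_inv (Km \<delta> (G (base p)) (wv G \<phi> p))) ** transpose (Pm (- Nq G p))) = mat 1"
    unfolding GBS_fun
    by (intro G_inv Dm_inv Pm_inv riem_inv[OF assms] K_inv[OF assms])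
  then show "matrix_inv (gBS_matrix \<delta> G \<phi> p) = Pm (- Nq G p) ** Dm (matrix_inv (G (base p))) (matrix_inv (Km \<delta> (G (base p)) (wv G \<phi> p))) ** transpose (Pm (- Nq G p))"
    by (rule matrix_inv_eq)
qed

lemma GBS_deriv:
  assumes "riem_metric U G" "open U" "base p \<in> U"
    "\<And>r c. (\<lambda>z. \<phi> z $ r $ c) differentiable (at (base p))"
  shows "\<exists>dG. (\<forall>a. mhd a (gBS_matrix \<delta> G \<phi>) p (dG a)) \<and>
     (\<forall>a. trace (matrix_inv (gBS_matrix \<delta> G \<phi> p) ** dG a) =
        trace (matrix_inv (G (base p)) ** dGa G (base p) a) + trace (matrix_inv (Km \<delta> (G (base p)) (wv G \<phi> p)) ** dKa \<delta> G \<phi> p a))"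
proof -
  have dG: "\<And>r c. (\<lambda>z. G z $ r $ c) differentiable (at (base p))" using riem_diff(1)[OF assms(1-3)] .
  define P where "P = Pm (Nq G p)"
  define D where "D = Dm (G (base p)) (Km \<delta> (G (base p)) (wv G \<phi> p))"
  define dP where "dP a = blk 0 0 (mpd a (Nq G) p) 0" for a
  define dD where "dD a = blk (dGa G (base p) a) 0 0 (dKa \<delta> G \<phi> p a)" for a
  define dGB where "dGB a = (transpose (dP a) ** D + transpose P ** dD a) ** P + (transpose P ** D) ** dP a" for a
  have m: "mhd a (gBS_matrix \<delta> G \<phi>) p (dGB a)" for a
    unfolding GBS_fun dGB_def P_def D_def dP_def dD_def
    by (intro mhd_mult mhd_transpose mhd_P[OF assms(1-3)] mhd_D dG assms(4))
  have t: "trace (matrix_inv (gBS_matrix \<delta> G \<phi> p) ** dGB a) =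
        trace (matrix_inv (G (base p)) ** dGa G (base p) a) + trace (matrix_inv (Km \<delta> (G (base p)) (wv G \<phi> p)) ** dKa \<delta> G \<phi> p a)" for a
  proof -
    have "trace (matrix_inv (gBS_matrix \<delta> G \<phi> p) ** dGB a) = trace (Dm (matrix_inv (G (base p))) (matrix_inv (Km \<delta> (G (base p)) (wv G \<phi> p))) ** dD a)"
      unfolding GBS_inv(2)[OF assms(1,3)] dGB_def
    proof (rule trace_PDP)
      show "P ** Pm (- Nq G p) = mat 1" "Pm (- Nq G p) ** P = mat 1" unfolding P_def by (rule Pm_inv)+
      have "D ** Dm (matrix_inv (G (base p))) (matrix_inv (Km \<delta> (G (base p)) (wv G \<phi> p))) = mat 1"
        unfolding D_def by (intro Dm_inv riem_inv[OF assms(1,3)] K_inv[OF assms(1,3)])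
      then show "Dm (matrix_inv (G (base p))) (matrix_inv (Km \<delta> (G (base p)) (wv G \<phi> p))) ** D = mat 1"
        using matrix_left_right_inverse by blast
      show "trace (Pm (- Nq G p) ** dP a) = 0" unfolding dP_def by (rule trace_Pm)
    qed
    also have "\<dots> = trace (matrix_inv (G (base p)) ** dGa G (base p) a) + trace (matrix_inv (Km \<delta> (G (base p)) (wv G \<phi> p)) ** dKa \<delta> G \<phi> p a)"
      unfolding dD_def Dm_def blk_mult trace_blk by simp
    finally show ?thesis .
  qed
  show ?thesis using m t by blast
qed

lemma sum_axis: "(\<Sum>b\<in>UNIV. c b *\<^sub>R ((A::real^'n::finite^'m) *v axis b 1)) = A *v (\<chi> b. c b)"
  unfolding mulv_axis vec_eq_iff by (simp add: matrix_vector_mult_def mult.commute)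

lemma N_col: "(\<chi> b. Nq G p $ b $ i) = Gam G (base p) i *v fib p"
  unfolding vec_eq_iff Nq_def Nmat_def Gam_def matrix_vector_mult_def by simp

lemma dya_simps[simp]: "dya (Inl i) = 0" "dya (Inr j) = axis j 1"
  unfolding dya_def by simp_all

lemma outer_sum_left: "outer (\<Sum>b\<in>S. c b *\<^sub>R u b) v = (\<Sum>b\<in>S. c b *\<^sub>R outer (u b) v)"
  unfolding outer_def vec_eq_iff by (simp add: sum_distrib_right mult.assoc)

lemma outer_sum_right: "outer v (\<Sum>b\<in>S. c b *\<^sub>R u b) = (\<Sum>b\<in>S. c b *\<^sub>R outer v (u b))"
  unfolding outer_def vec_eq_iff by (simp add: sum_distrib_left mult.left_commute)

lemma outer_diff_left: "outer (u - u') v = outer u v - outer u' v"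
  unfolding outer_def vec_eq_iff by (simp add: left_diff_distrib)

lemma outer_diff_right: "outer v (u - u') = outer v u - outer v u'"
  unfolding outer_def vec_eq_iff by (simp add: right_diff_distrib)

lemma outer_mulv_left: "outer (A *v u) v = A ** outer u v"
  unfolding outer_def vec_eq_iff by (simp add: matrix_matrix_mult_def matrix_vector_mult_def sum_distrib_right mult.assoc)

lemma outer_mulv_right: "outer u ((A::real^'n::finite^'m) *v v) = outer u v ** transpose A"
  unfolding outer_def vec_eq_iff by (simp add: matrix_matrix_mult_def matrix_vector_mult_def transpose_def sum_distrib_left mult_ac)

lemma trace_mul_eq: "trace ((A::real^'n::finite^'n) ** M) = (\<Sum>i\<in>UNIV. \<Sum>k\<in>UNIV. A $ i $ k * M $ k $ i)"
  unfolding trace_def matrix_matrix_mult_def by simp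

lemma trace_lin: "trace ((A::real^'n::finite^'n) ** (\<Sum>b\<in>UNIV. c b *\<^sub>R C b)) = (\<Sum>b\<in>UNIV. c b * trace (A ** C b))"
proof -
  have "trace (A ** (\<Sum>b\<in>UNIV. c b *\<^sub>R C b)) = (\<Sum>i\<in>UNIV. \<Sum>k\<in>UNIV. \<Sum>b\<in>UNIV. c b * (A $ i $ k * C b $ k $ i))"
    unfolding trace_mul_eq by (simp add: sum_distrib_left mult.left_commute)
  also have "\<dots> = (\<Sum>i\<in>UNIV. \<Sum>b\<in>UNIV. \<Sum>k\<in>UNIV. c b * (A $ i $ k * C b $ k $ i))"
    by (rule sum.cong[OF refl], rule sum.swap)
  also have "\<dots> = (\<Sum>b\<in>UNIV. \<Sum>i\<in>UNIV. \<Sum>k\<in>UNIV. c b * (A $ i $ k * C b $ k $ i))"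
    by (rule sum.swap)
  also have "\<dots> = (\<Sum>b\<in>UNIV. c b * trace (A ** C b))"
    unfolding trace_mul_eq by (simp add: sum_distrib_left)
  finally show ?thesis .
qed

lemma horiz_w:
  assumes "anti_paraKaehler U G \<phi>" "base p \<in> U"
  shows "dwa G \<phi> p (Inl i) - (\<Sum>b\<in>UNIV. Nq G p $ b $ i *\<^sub>R dwa G \<phi> p (Inr b)) = transpose (Gam G (base p) i) *v wv G \<phi> p"
proof -
  have R: "riem_metric U G" "open U" and C: "\<forall>x\<in>U. \<forall>i l j. covd_phi G \<phi> x i l j = 0"
    using assms(1) unfolding anti_paraKaehler_def by auto
  define g where "g = G (base p)"
  define f where "f = \<phi> (base p)"
  define T where "T = Gam G (base p) i"
  define y where "y = fib p"
  have dwi: "dwa G \<phi> p (Inl i) = (transpose T ** g + g ** T) *v (f *v y) + g *v ((f ** T - T ** f) *v y)"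
    unfolding dwa_def dGa_def liftm_simps metric_compat[OF R assms(2)] covd_eq[OF C assms(2)] g_def f_def T_def y_def
    by simp
  have dwb: "dwa G \<phi> p (Inr b) = (g ** f) *v axis b 1" for b
    unfolding dwa_def dGa_def liftm_simps g_def f_def by (simp add: matrix_vector_mul_assoc)
  have S: "(\<Sum>b\<in>UNIV. Nq G p $ b $ i *\<^sub>R dwa G \<phi> p (Inr b)) = g *v (f *v (T *v y))"
    unfolding dwb sum_axis N_col T_def y_def by (simp add: matrix_vector_mul_assoc matrix_mul_assoc)
  show ?thesis unfolding dwi S wv_def g_def[symmetric] f_def[symmetric] T_def[symmetric] y_def[symmetric]
    by (simp add: matrix_vector_mult_add_rdistrib matrix_vector_mult_diff_rdistrib matrix_vector_mult_diff_distrib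
        matrix_vector_right_distrib matrix_vector_mul_assoc[symmetric] del: transpose_matrix_vector)
qed

lemma matrix_diff_ldistrib: "(A::real^'m::finite^'n) ** (B - C) = A ** B - A ** C"
  by (simp add: matrix_matrix_mult_def vec_eq_iff sum_subtractf right_diff_distrib)

lemma horiz_K:
  assumes "anti_paraKaehler U G \<phi>" "base p \<in> U"
  shows "dKa \<delta> G \<phi> p (Inl i) - (\<Sum>b\<in>UNIV. Nq G p $ b $ i *\<^sub>R dKa \<delta> G \<phi> p (Inr b))
     = transpose (Gam G (base p) i) ** Km \<delta> (G (base p)) (wv G \<phi> p) + Km \<delta> (G (base p)) (wv G \<phi> p) ** Gam G (base p) i"
proof -
  have R: "riem_metric U G" "open U"
    using assms(1) unfolding anti_paraKaehler_def by auto
  define w where "w = wv G \<phi> p"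
  define T where "T = Gam G (base p) i"
  define g where "g = G (base p)"
  define c where "c b = Nq G p $ b $ i" for b
  define SW where "SW = (\<Sum>b\<in>UNIV. c b *\<^sub>R dwa G \<phi> p (Inr b))"
  have hw: "dwa G \<phi> p (Inl i) - SW = transpose T *v w"
    unfolding SW_def c_def T_def w_def by (rule horiz_w[OF assms])
  have dKb: "dKa \<delta> G \<phi> p (Inr b) = \<delta>^2 *\<^sub>R (outer (dwa G \<phi> p (Inr b)) w + outer w (dwa G \<phi> p (Inr b)))" for b
    unfolding dKa_def dGa_def w_def by simp
  have dKi: "dKa \<delta> G \<phi> p (Inl i) = (transpose T ** g + g ** T) + \<delta>^2 *\<^sub>R (outer (dwa G \<phi> p (Inl i)) w + outer w (dwa G \<phi> p (Inl i)))"
    unfolding dKa_def dGa_def w_def liftm_simps metric_compat[OF R assms(2)] T_def g_def by simp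
  have sK: "(\<Sum>b\<in>UNIV. c b *\<^sub>R dKa \<delta> G \<phi> p (Inr b)) = \<delta>^2 *\<^sub>R (outer SW w + outer w SW)"
    unfolding dKb SW_def outer_sum_left outer_sum_right
    by (simp add: scaleR_sum_right sum.distrib scaleR_add_right mult.commute)
  have "dKa \<delta> G \<phi> p (Inl i) - (\<Sum>b\<in>UNIV. c b *\<^sub>R dKa \<delta> G \<phi> p (Inr b))
      = (transpose T ** g + g ** T) + \<delta>^2 *\<^sub>R (outer (dwa G \<phi> p (Inl i) - SW) w + outer w (dwa G \<phi> p (Inl i) - SW))"
    unfolding dKi sK outer_diff_left outer_diff_right by (simp add: algebra_simps)
  also have "\<dots> = (transpose T ** g + g ** T) + \<delta>^2 *\<^sub>R (transpose T ** outer w w + outer w w ** T)"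
    unfolding hw outer_mulv_left outer_mulv_right by simp
  also have "\<dots> = transpose T ** Km \<delta> g w + Km \<delta> g w ** T"
    unfolding Km_def matrix_add_ldistrib matrix_add_rdistrib' matrix_scalar_ac scalar_matrix_assoc[symmetric]
    by (simp add: algebra_simps)
  finally show ?thesis unfolding c_def w_def T_def g_def .
qed

lemma trace_horiz:
  assumes "anti_paraKaehler U G \<phi>" "base p \<in> U"
  shows "trace (matrix_inv (Km \<delta> (G (base p)) (wv G \<phi> p)) ** dKa \<delta> G \<phi> p (Inl i))
    - (\<Sum>b\<in>UNIV. Nq G p $ b $ i * trace (matrix_inv (Km \<delta> (G (base p)) (wv G \<phi> p)) ** dKa \<delta> G \<phi> p (Inr b)))
    = 2 * trace (Gam G (base p) i)"
proof -
  have R: "riem_metric U G" using assms(1) unfolding anti_paraKaehler_def by auto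
  define K where "K = Km \<delta> (G (base p)) (wv G \<phi> p)"
  have K1: "K ** matrix_inv K = mat 1" unfolding K_def by (rule K_inv[OF R assms(2)])
  then have K2: "matrix_inv K ** K = mat 1" using matrix_left_right_inverse by blast
  have "trace (matrix_inv K ** dKa \<delta> G \<phi> p (Inl i)) - (\<Sum>b\<in>UNIV. Nq G p $ b $ i * trace (matrix_inv K ** dKa \<delta> G \<phi> p (Inr b)))
     = trace (matrix_inv K ** (dKa \<delta> G \<phi> p (Inl i) - (\<Sum>b\<in>UNIV. Nq G p $ b $ i *\<^sub>R dKa \<delta> G \<phi> p (Inr b))))"
    unfolding matrix_diff_ldistrib trace_sub trace_lin ..
  also have "\<dots> = 2 * trace (Gam G (base p) i)"
    unfolding horiz_K[OF assms] K_def[symmetric] by (rule trace_compat[OF K1 K2])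
  finally show ?thesis unfolding K_def .
qed

lemma trace_g:
  assumes "riem_metric U G" "open U" "x \<in> U"
  shows "trace (matrix_inv (G x) ** mpd i G x) = 2 * trace (Gam G x i)"
  unfolding metric_compat[OF assms] by (rule trace_compat[OF riem_inv(1,2)[OF assms(1,3)]])

lemma open_tb: "open U \<Longrightarrow> open (tb U)"
proof -
  assume "open U"
  have "continuous_on UNIV (base :: real^('n::finite+'n) \<Rightarrow> real^'n)"
    unfolding base_def[abs_def] by (intro continuous_intros)
  then have "open (base -` U)" using \<open>open U\<close> by (intro open_vimage) auto
  moreover have "tb U = base -` U" unfolding tb_def by auto
  ultimately show ?thesis by simp
qed

lemma transpose_add': "transpose ((A::real^'a::finite^'b::finite) + B) = transpose A + transpose B"
  by (simp add: transpose_def vec_eq_iff)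

lemma transpose_outer: "transpose (outer w w) = outer w w"
  by (simp add: transpose_def outer_def vec_eq_iff mult.commute)

lemma GBS_sym:
  assumes "riem_metric U G" "base p \<in> U"
  shows "transpose (gBS_matrix \<delta> G \<phi> p) = gBS_matrix \<delta> G \<phi> p"
proof -
  have g: "transpose (G (base p)) = G (base p)" using assms unfolding riem_metric_def by blast
  have K: "transpose (Km \<delta> (G (base p)) (wv G \<phi> p)) = Km \<delta> (G (base p)) (wv G \<phi> p)"
    unfolding Km_def transpose_add' transpose_scalar transpose_outer g ..
  have D: "transpose (Dm (G (base p)) (Km \<delta> (G (base p)) (wv G \<phi> p))) = Dm (G (base p)) (Km \<delta> (G (base p)) (wv G \<phi> p))"
    unfolding Dm_def blk_transpose g K by simp
  show ?thesis unfolding GBS_fun by (simp add: matrix_transpose_mul D matrix_mul_assoc)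
qed

lemma Gi_xx: "(Pm (- N) ** Dm gi Ki ** transpose (Pm (- N))) $ Inl m $ Inl q = gi $ m $ q"
  by (rule Gi_row(1))

lemma hd_Nq_entry:
  assumes "riem_metric U G" "open U" "base p \<in> U"
  shows "ldr a (\<lambda>q. Nq G q $ r $ c) p
     (\<Sum>j\<in>UNIV. liftm (\<lambda>i. pd i (\<lambda>z. christoffel G z r c j) (base p)) a * fib p $ j + christoffel G (base p) r c j * dya a $ j)"
proof -
  have "ldr a (\<lambda>q. christoffel G (base q) r c j) p (liftm (\<lambda>i. pd i (\<lambda>z. christoffel G z r c j) (base p)) a)" for j
    unfolding liftm_def by (rule hd_lift, rule christoffel_hd[OF assms])
  moreover have "ldr a (\<lambda>q. fib q $ j) p (dya a $ j)" for j using vhd_fib unfolding vhd_def by blast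
  ultimately show ?thesis unfolding Nq_def Nmat_def by (simp, intro hd_sum hd_mult) auto
qed

definition Erow where
  "Erow G l e q = (case e of Inl i \<Rightarrow> matrix_inv (G (base q)) $ l $ i
      | Inr b \<Rightarrow> - (\<Sum>j\<in>UNIV. matrix_inv (G (base q)) $ l $ j * Nq G q $ b $ j))"

lemma Erow_eq:
  assumes "riem_metric U G" "q \<in> tb U"
  shows "matrix_inv (gBS_matrix \<delta> G \<phi> q) $ Inl l $ e = Erow G l e q"
proof -
  have q: "base q \<in> U" using assms(2) unfolding tb_def by simp
  show ?thesis unfolding GBS_inv(2)[OF assms(1) q] Erow_def by (cases e) (auto simp: Gi_row)
qed

lemma hd_Erow_l:
  assumes "riem_metric U G" "open U" "base p \<in> U"
  shows "ldr a (Erow G l (Inl i)) p (liftm (\<lambda>k. pd k (\<lambda>z. matrix_inv (G z) $ l $ i) (base p)) a)"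
  unfolding Erow_def sum.case liftm_def by (rule hd_lift, rule inv_hd[OF assms])

lemma hd_Erow_r:
  assumes "riem_metric U G" "open U" "base p \<in> U"
  shows "ldr a (Erow G l (Inr b)) p
    (- (\<Sum>j\<in>UNIV. liftm (\<lambda>k. pd k (\<lambda>z. matrix_inv (G z) $ l $ j) (base p)) a * Nq G p $ b $ j
        + matrix_inv (G (base p)) $ l $ j *
          (\<Sum>k\<in>UNIV. liftm (\<lambda>i. pd i (\<lambda>z. christoffel G z b j k) (base p)) a * fib p $ k + christoffel G (base p) b j k * dya a $ k)))"
proof -
  have "ldr a (\<lambda>q. matrix_inv (G (base q)) $ l $ j) p (liftm (\<lambda>k. pd k (\<lambda>z. matrix_inv (G z) $ l $ j) (base p)) a)" for j
    unfolding liftm_def by (rule hd_lift, rule inv_hd[OF assms])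
  then show ?thesis unfolding Erow_def sum.case
    by (intro hd_minus hd_sum hd_mult hd_Nq_entry[OF assms]) auto
qed

lemma trace_Gam: "trace (Gam G x j) = (\<Sum>b\<in>UNIV. christoffel G x b j b)"
  unfolding trace_def Gam_def by simp

lemma SBS:
  assumes APK: "anti_paraKaehler U G \<phi>" and xU: "base p \<in> U"
  shows "(\<Sum>a\<in>UNIV. \<Sum>b\<in>UNIV. matrix_inv (gBS_matrix \<delta> G \<phi> p) $ a $ b * christoffel (gBS_matrix \<delta> G \<phi>) p (Inl l) a b)
    = - (\<Sum>i\<in>UNIV. pd i (\<lambda>z. matrix_inv (G z) $ l $ i) (base p)) - (\<Sum>i\<in>UNIV. matrix_inv (G (base p)) $ l $ i * trace (Gam G (base p) i))"
proof -
  have R: "riem_metric U G" "open U" using APK unfolding anti_paraKaehler_def by auto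
  have dphi: "(\<lambda>z. \<phi> z $ r $ c) differentiable (at (base p))" for r c
    using APK xU unfolding anti_paraKaehler_def apc_structure_def by (intro smooth_diff) auto
  define x where "x = base p"
  define gi where "gi = matrix_inv (G x)"
  define Gi where "Gi = matrix_inv (gBS_matrix \<delta> G \<phi> p)"
  define Ki where "Ki = matrix_inv (Km \<delta> (G x) (wv G \<phi> p))"
  define N where "N = Nq G p"
  obtain dG where dG: "\<And>a. mhd a (gBS_matrix \<delta> G \<phi>) p (dG a)"
    and tr: "\<And>a. trace (Gi ** dG a) = trace (gi ** dGa G x a) + trace (Ki ** dKa \<delta> G \<phi> p a)"
    using GBS_deriv[OF R xU dphi, of \<delta>] unfolding Gi_def gi_def Ki_def x_def by blast
  define dGi where "dGi a = (\<chi> e. pd a (\<lambda>z. matrix_inv (gBS_matrix \<delta> G \<phi> z) $ Inl l $ e) p)" for a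
  have pT: "p \<in> tb U" using xU unfolding tb_def by simp
  have Eeq: "\<And>z. z \<in> tb U \<Longrightarrow> Erow G l e z = matrix_inv (gBS_matrix \<delta> G \<phi> z) $ Inl l $ e" for e
    using Erow_eq[OF R(1)] by metis
  have transfer: "ldr a (\<lambda>z. matrix_inv (gBS_matrix \<delta> G \<phi> z) $ Inl l $ e) p D" if "ldr a (Erow G l e) p D" for a e D
    by (rule hd_local[OF open_tb[OF R(2)] pT Eeq that])
  have hdGi: "ldr a (\<lambda>z. matrix_inv (gBS_matrix \<delta> G \<phi> z) $ Inl l $ e) p (dGi a $ e)" for a e
  proof (cases e)
    case (Inl i)
    show ?thesis unfolding dGi_def vec_lambda_beta
      by (rule hd_pd', rule transfer, unfold Inl, rule hd_Erow_l[OF R xU])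
  next
    case (Inr b)
    show ?thesis unfolding dGi_def vec_lambda_beta
      by (rule hd_pd', rule transfer, unfold Inr, rule hd_Erow_r[OF R xU])
  qed
  have inv1: "matrix_inv (gBS_matrix \<delta> G \<phi> z) ** gBS_matrix \<delta> G \<phi> z = mat 1" if "z \<in> tb U" for z
  proof -
    have "base z \<in> U" using that unfolding tb_def by simp
    then show ?thesis using GBS_inv[OF R(1)] matrix_left_right_inverse by metis
  qed
  have symGi: "transpose Gi = Gi" unfolding Gi_def
    by (rule sym_inv[OF _ GBS_sym[OF R(1) xU]]) (metis GBS_inv(1,2)[OF R(1) xU])
  have CT: "(\<Sum>a\<in>UNIV. \<Sum>b\<in>UNIV. Gi $ a $ b * christoffel (gBS_matrix \<delta> G \<phi>) p (Inl l) a b)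
     = - (\<Sum>a\<in>UNIV. dGi a $ a) - (1/2) * (\<Sum>a\<in>UNIV. Gi $ Inl l $ a * trace (Gi ** dG a))"
    unfolding Gi_def by (rule chr_trace[OF open_tb[OF R(2)] pT inv1 symGi[unfolded Gi_def] dG hdGi])
    have d1: "dGi (Inl i) $ Inl i = pd i (\<lambda>z. matrix_inv (G z) $ l $ i) x" for i
    using hd_unique[OF hdGi transfer[OF hd_Erow_l[OF R xU]]] unfolding x_def by simp
  have d2: "dGi (Inr b) $ Inr b = - (\<Sum>j\<in>UNIV. gi $ l $ j * christoffel G x b j b)" for b
  proof -
    have "dGi (Inr b) $ Inr b = - (\<Sum>j\<in>UNIV. 0 * N $ b $ j + gi $ l $ j *
          (\<Sum>k\<in>UNIV. 0 * fib p $ k + christoffel G x b j k * axis b 1 $ k))"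
      using hd_unique[OF hdGi transfer[OF hd_Erow_r[OF R xU]]] unfolding x_def gi_def N_def by simp
    also have "\<dots> = - (\<Sum>j\<in>UNIV. gi $ l $ j * christoffel G x b j b)"
      by (simp add: axis_def if_distrib[of "\<lambda>t. _ * t"] cong: if_cong)
    finally show ?thesis .
  qed
  have A: "(\<Sum>a\<in>UNIV. dGi a $ a) = (\<Sum>i\<in>UNIV. pd i (\<lambda>z. matrix_inv (G z) $ l $ i) x) - (\<Sum>j\<in>UNIV. gi $ l $ j * trace (Gam G x j))"
  proof -
    have "(\<Sum>b\<in>UNIV. \<Sum>j\<in>UNIV. gi $ l $ j * christoffel G x b j b) = (\<Sum>j\<in>UNIV. \<Sum>b\<in>UNIV. gi $ l $ j * christoffel G x b j b)"
      by (rule sum.swap)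
    then show ?thesis unfolding sum_UNIV_plus d1 d2 trace_Gam
      by (simp add: sum_negf sum_distrib_left)
  qed
    have G1: "Gi $ Inl l $ Inl i = gi $ l $ i" for i
    unfolding Gi_def gi_def x_def GBS_inv(2)[OF R(1) xU] Gi_row ..
  have G2: "Gi $ Inl l $ Inr b = - (\<Sum>j\<in>UNIV. gi $ l $ j * N $ b $ j)" for b
    unfolding Gi_def gi_def x_def N_def GBS_inv(2)[OF R(1) xU] Gi_row ..
  define t where "t b = trace (Ki ** dKa \<delta> G \<phi> p (Inr b))" for b
  have tr1: "trace (Gi ** dG (Inl i)) = 2 * trace (Gam G x i) + trace (Ki ** dKa \<delta> G \<phi> p (Inl i))" for i
  proof -
    have xU': "x \<in> U" using xU unfolding x_def .
    show ?thesis unfolding tr dGa_def liftm_simps gi_def trace_g[OF R xU'] ..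
  qed
  have tr2: "trace (Gi ** dG (Inr b)) = t b" for b
    unfolding tr dGa_def liftm_simps t_def by (simp add: trace_def)
  have hz: "trace (Ki ** dKa \<delta> G \<phi> p (Inl i)) - (\<Sum>b\<in>UNIV. N $ b $ i * t b) = 2 * trace (Gam G x i)" for i
    unfolding Ki_def N_def t_def x_def by (rule trace_horiz[OF APK xU])
  have B: "(\<Sum>a\<in>UNIV. Gi $ Inl l $ a * trace (Gi ** dG a)) = (\<Sum>i\<in>UNIV. gi $ l $ i * (4 * trace (Gam G x i)))"
  proof -
    have "(\<Sum>a\<in>UNIV. Gi $ Inl l $ a * trace (Gi ** dG a))
        = (\<Sum>i\<in>UNIV. gi $ l $ i * (2 * trace (Gam G x i) + trace (Ki ** dKa \<delta> G \<phi> p (Inl i))))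
          - (\<Sum>b\<in>UNIV. \<Sum>j\<in>UNIV. gi $ l $ j * N $ b $ j * t b)"
      unfolding sum_UNIV_plus G1 G2 tr1 tr2 by (simp add: sum_negf sum_distrib_right)
    also have "(\<Sum>b\<in>UNIV. \<Sum>j\<in>UNIV. gi $ l $ j * N $ b $ j * t b) = (\<Sum>j\<in>UNIV. gi $ l $ j * (\<Sum>b\<in>UNIV. N $ b $ j * t b))"
      by (subst sum.swap) (simp add: sum_distrib_left mult.assoc)
    finally have "(\<Sum>a\<in>UNIV. Gi $ Inl l $ a * trace (Gi ** dG a))
        = (\<Sum>i\<in>UNIV. gi $ l $ i * (2 * trace (Gam G x i) + trace (Ki ** dKa \<delta> G \<phi> p (Inl i)) - (\<Sum>b\<in>UNIV. N $ b $ i * t b)))"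
      by (simp add: sum_subtractf right_diff_distrib)
    also have "\<dots> = (\<Sum>i\<in>UNIV. gi $ l $ i * (4 * trace (Gam G x i)))"
    proof (rule sum.cong[OF refl])
      fix i
      have "2 * trace (Gam G x i) + trace (Ki ** dKa \<delta> G \<phi> p (Inl i)) - (\<Sum>b\<in>UNIV. N $ b $ i * t b) = 4 * trace (Gam G x i)"
        using hz[of i] by linarith
      then show "gi $ l $ i * (2 * trace (Gam G x i) + trace (Ki ** dKa \<delta> G \<phi> p (Inl i)) - (\<Sum>b\<in>UNIV. N $ b $ i * t b))
          = gi $ l $ i * (4 * trace (Gam G x i))" by simp
    qed
    finally show ?thesis .
  qed
  have B': "(\<Sum>i\<in>UNIV. gi $ l $ i * (4 * trace (Gam G x i))) = 4 * (\<Sum>i\<in>UNIV. gi $ l $ i * trace (Gam G x i))"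
    by (simp add: sum_distrib_left mult_ac)
  show ?thesis using CT unfolding A B B' Gi_def[symmetric] gi_def[symmetric] x_def[symmetric]
    by linarith
qed

lemma Sg:
  assumes R: "riem_metric U G" "open U" and xU: "x \<in> U"
  shows "(\<Sum>a\<in>UNIV. \<Sum>b\<in>UNIV. matrix_inv (G x) $ a $ b * christoffel G x l a b)
    = - (\<Sum>i\<in>UNIV. pd i (\<lambda>z. matrix_inv (G z) $ l $ i) x) - (\<Sum>i\<in>UNIV. matrix_inv (G x) $ l $ i * trace (Gam G x i))"
proof -
  have inv1: "matrix_inv (G z) ** G z = mat 1" if "z \<in> U" for z using riem_inv(2)[OF R(1) that] .
  have dG: "mhd a G x (mpd a G x)" for a
    unfolding mhd_def using mhd_mpd[OF riem_diff(1)[OF R xU]] by blast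
  have dGi: "ldr a (\<lambda>z. matrix_inv (G z) $ l $ e) x ((\<chi> e. pd a (\<lambda>z. matrix_inv (G z) $ l $ e) x) $ e)" for a e
    unfolding vec_lambda_beta by (rule inv_hd[OF R xU])
  have CT: "(\<Sum>a\<in>UNIV. \<Sum>b\<in>UNIV. matrix_inv (G x) $ a $ b * christoffel G x l a b)
     = - (\<Sum>a\<in>UNIV. (\<chi> e. pd a (\<lambda>z. matrix_inv (G z) $ l $ e) x) $ a) - (1/2) * (\<Sum>a\<in>UNIV. matrix_inv (G x) $ l $ a * trace (matrix_inv (G x) ** mpd a G x))"
    by (rule chr_trace[OF R(2) xU inv1 riem_inv(3)[OF R(1) xU] dG dGi])
  have "(\<Sum>a\<in>UNIV. matrix_inv (G x) $ l $ a * trace (matrix_inv (G x) ** mpd a G x)) = 2 * (\<Sum>i\<in>UNIV. matrix_inv (G x) $ l $ i * trace (Gam G x i))"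
    unfolding trace_g[OF R xU] by (simp add: sum_distrib_left mult_ac)
  then show ?thesis using CT by simp
qed

lemma pd_base_comp: "pd c (\<lambda>z. base z $ m) q = (if c = Inl m then 1 else 0)"
proof -
  have "((\<lambda>t. q $ Inl m + t * axis c 1 $ Inl m) has_real_derivative axis c 1 $ Inl m) (at 0)"
    by (auto intro!: derivative_eq_intros)
  then have "ldr c (\<lambda>z. base z $ m) q (axis c 1 $ Inl m)" unfolding ldr_def by simp
  then show ?thesis by (auto dest!: hd_pd simp: axis_def)
qed

lemma pd_pd_base: "pd a (pd b (\<lambda>z. base z $ m)) q = 0"
proof -
  have e: "pd b (\<lambda>z. base z $ m) = (\<lambda>z. if b = Inl m then 1 else 0)" by (rule ext) (rule pd_base_comp)
  show ?thesis by (simp only: e) (rule hd_pd[OF hd_const])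
qed

lemma mult_ind: "(x::real) * (if P then 1 else 0) = (if P then x else 0)" by simp

lemma delta2:
  fixes X :: "'a::finite \<Rightarrow> 'b::finite \<Rightarrow> real"
  shows "(\<Sum>m\<in>UNIV. \<Sum>q\<in>UNIV. X m q * (if i = m then 1 else 0) * (if j = q then 1 else 0)) = X i j"
  by (simp add: mult_ind sum.delta' cong: if_cong)

lemma ind2:
  fixes X :: "'a::finite \<Rightarrow> 'a \<Rightarrow> real" and a b :: "'a + 'a"
  shows "(\<Sum>m\<in>UNIV. \<Sum>q\<in>UNIV. X m q * (if a = Inl m then 1 else 0) * (if b = Inl q then 1 else 0))
      = (case a of Inl m \<Rightarrow> (case b of Inl q \<Rightarrow> X m q | Inr _ \<Rightarrow> 0) | Inr _ \<Rightarrow> 0)"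
  by (cases a; cases b) (simp_all add: delta2)

lemma sum_case_plus:
  fixes Y :: "('a::finite + 'a) \<Rightarrow> ('a + 'a) \<Rightarrow> real"
  shows "(\<Sum>a\<in>UNIV. \<Sum>b\<in>UNIV. Y a b * (case a of Inl m \<Rightarrow> (case b of Inl q \<Rightarrow> X m q | Inr _ \<Rightarrow> 0) | Inr _ \<Rightarrow> 0))
     = (\<Sum>m\<in>UNIV. \<Sum>q\<in>UNIV. Y (Inl m) (Inl q) * X m q)"
  unfolding sum_UNIV_plus by simp

lemma tension_base:
  "tension M H base p l = - (\<Sum>a\<in>UNIV. \<Sum>b\<in>UNIV. matrix_inv (M p) $ a $ b * christoffel M p (Inl l) a b)
     + (\<Sum>m\<in>UNIV. \<Sum>q\<in>UNIV. matrix_inv (M p) $ Inl m $ Inl q * christoffel H (base p) l m q)"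
proof -
  have 1: "(\<Sum>c\<in>UNIV. christoffel M p c a b * (if c = Inl l then 1 else 0)) = christoffel M p (Inl l) a b" for a b
    by (simp add: if_distrib[of "\<lambda>t. _ * t"] cong: if_cong)
  show ?thesis
    unfolding tension_def pd_pd_base pd_base_comp 1 ind2
    by (simp add: sum_case_plus sum_negf sum.distrib distrib_left right_diff_distrib sum_subtractf)
qed

lemma tension_eq:
  assumes APK: "anti_paraKaehler U G \<phi>" and xU: "base p \<in> U"
  shows "tension (gBS_matrix \<delta> G \<phi>) H base p l =
    (\<Sum>i\<in>UNIV. \<Sum>j\<in>UNIV. matrix_inv (G (base p)) $ i $ j * (christoffel H (base p) l i j - christoffel G (base p) l i j))"
proof -
  have R: "riem_metric U G" "open U" using APK unfolding anti_paraKaehler_def by auto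
  have xx: "matrix_inv (gBS_matrix \<delta> G \<phi> p) $ Inl m $ Inl q = matrix_inv (G (base p)) $ m $ q" for m q
    unfolding GBS_inv(2)[OF R(1) xU] Gi_xx ..
  show ?thesis
    unfolding tension_base SBS[OF APK xU] xx Sg[OF R xU, symmetric]
    by (simp add: right_diff_distrib sum_subtractf)
qed

theorem mainTheorem3:
  fixes U :: "(real^'n::finite) set"
    and G H \<phi> \<phi>1 :: "real^'n \<Rightarrow> real^'n^'n"
    and \<delta> :: real
  assumes "anti_paraKaehler U G \<phi>"
    and "riem_metric U H"
    and "apc_structure U \<phi>1"
    and "anti_paraHermitian U H \<phi>1"
  shows "harmonic_map (tb U) (gBS_matrix \<delta> G \<phi>) H base \<longleftrightarrow>
    (\<forall>x\<in>U. \<forall>l. (\<Sum>i\<in>UNIV. \<Sum>j\<in>UNIV. matrix_inv (G x) $ i $ j *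
        (christoffel H x l i j - christoffel G x l i j)) = 0)"
proof
  assume h: "harmonic_map (tb U) (gBS_matrix \<delta> G \<phi>) H base"
  show "\<forall>x\<in>U. \<forall>l. (\<Sum>i\<in>UNIV. \<Sum>j\<in>UNIV. matrix_inv (G x) $ i $ j *
        (christoffel H x l i j - christoffel G x l i j)) = 0"
  proof (intro ballI allI)
    fix x l assume xU: "x \<in> U"
    define p :: "real^('n+'n)" where "p = pair_tb x 0"
    have bp: "base p = x" unfolding p_def by simp
    have "p \<in> tb U" unfolding tb_def using bp xU by simp
    then have "tension (gBS_matrix \<delta> G \<phi>) H base p l = 0" using h unfolding harmonic_map_def by blast
    then show "(\<Sum>i\<in>UNIV. \<Sum>j\<in>UNIV. matrix_inv (G x) $ i $ j *
        (christoffel H x l i j - christoffel G x l i j)) = 0"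
      unfolding tension_eq[OF assms(1) bp[symmetric, THEN subst, of "\<lambda>x. x \<in> U", OF xU]] bp .
  qed
next
  assume h: "\<forall>x\<in>U. \<forall>l. (\<Sum>i\<in>UNIV. \<Sum>j\<in>UNIV. matrix_inv (G x) $ i $ j *
        (christoffel H x l i j - christoffel G x l i j)) = 0"
  show "harmonic_map (tb U) (gBS_matrix \<delta> G \<phi>) H base"
    unfolding harmonic_map_def
  proof (intro ballI allI)
    fix p l assume "p \<in> tb U"
    then have pU: "base p \<in> U" unfolding tb_def by simp
    show "tension (gBS_matrix \<delta> G \<phi>) H base p l = 0"
      unfolding tension_eq[OF assms(1) pU] using h pU by blast
  qed
qed

end
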